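(* If a link $L\subset\mathbb{R}^3$ has thickness $\tau>0$, then its secant map $S$ has Lipschitz constant $1/(2\tau)$ on $(L\times L)\setminus\Delta$. Consequently $L$ is $C^{1,1}$.
   Context: A link is a disjoint union of finitely many simple closed curves in $\mathbb{R}^3$. For distinct $x,y,z\in\mathbb{R}^3$, $r(x,y,z)$ is the radius of the circle through them ($\infty$ if collinear); the thickness is $\tau(L)=\inf r(x,y,z)$ over pairwise distinct $x,y,z\in L$. The secant map is $S(x,y)=\pm\frac{x-y}{|x-y|}\in\mathbb{R}P^2$ for $x\neq y\in L$; $\Delta$ is the diagonal of $L\times L$. Metrics: on $L\times L$, the sum of the (shorter) arclength distances in the two factors; on $\mathbb{R}P^2$, the distance between two points is $\sin\theta$, where $\theta$ is the angle between lifts of the points to $S^2$. $C^{1,1}$ is with respect to the constant-speed parametrization. *)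

theory Defs
  imports "HOL-Analysis.Analysis"
begin

type_synonym R3 = "real^3"

definition simple_closed_curve :: "R3 set \<Rightarrow> bool" where
  "simple_closed_curve C \<longleftrightarrow>
     (\<exists>g. simple_path g \<and> pathfinish g = pathstart g \<and> path_image g = C)"

definition is_link :: "R3 set \<Rightarrow> bool" where
  "is_link L \<longleftrightarrow> (\<exists>F. finite F \<and> (\<forall>C\<in>F. simple_closed_curve C) \<and>
       pairwise disjnt F \<and> L = \<Union>F)"

definition circ_radius :: "R3 \<Rightarrow> R3 \<Rightarrow> R3 \<Rightarrow> ereal" where
  "circ_radius x y z =
     (if collinear {x, y, z} then \<infinity>
      else ereal (THE \<rho>. \<exists>c. c \<in> affine hull {x, y, z} \<and>
                        dist c x = \<rho> \<and> dist c y = \<rho> \<and> dist c z = \<rho>))"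

definition thickness :: "R3 set \<Rightarrow> ereal" where
  "thickness L = Inf {circ_radius x y z | x y z.
       x \<in> L \<and> y \<in> L \<and> z \<in> L \<and> x \<noteq> y \<and> y \<noteq> z \<and> x \<noteq> z}"

text \<open>Secant map: the unit vector (x-y)/|x-y|, a lift to S^2 of the point of RP^2.\<close>
definition secant :: "R3 \<Rightarrow> R3 \<Rightarrow> R3" where
  "secant x y = (x - y) /\<^sub>R norm (x - y)"

text \<open>Distance on RP^2 between the points represented by nonzero vectors u, v:
  sin of the angle between lifts (independent of the choice of lifts).\<close>
definition rp2_dist :: "R3 \<Rightarrow> R3 \<Rightarrow> real" where
  "rp2_dist u v = sin (arccos ((u \<bullet> v) / (norm u * norm v)))"

definition path_length :: "(real \<Rightarrow> R3) \<Rightarrow> ereal" where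
  "path_length g = Sup {ereal (\<Sum>i<n. norm (g (t (Suc i)) - g (t i))) | n t.
       t 0 = 0 \<and> t n = 1 \<and> (\<forall>i<n. t i \<le> t (Suc i))}"

text \<open>Arclength (intrinsic) distance in L: infimum of lengths of paths in L joining
  x and y (infinite for points on different components).  On a simple closed curve
  this is the length of the shorter of the two arcs between x and y.\<close>
definition arc_dist :: "R3 set \<Rightarrow> R3 \<Rightarrow> R3 \<Rightarrow> ereal" where
  "arc_dist L x y = Inf {path_length g | g. path g \<and> path_image g \<subseteq> L \<and>
       pathstart g = x \<and> pathfinish g = y}"

definition C11_link :: "R3 set \<Rightarrow> bool" where
  "C11_link L \<longleftrightarrow> (\<forall>x\<in>L. \<exists>\<gamma> \<gamma>' lam K.
       (\<forall>t. \<gamma> (t + 1) = \<gamma> t) \<and> inj_on \<gamma> {0..<1} \<and>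
       \<gamma> ` {0..1} = connected_component_set L x \<and>
       (\<forall>t. (\<gamma> has_vector_derivative \<gamma>' t) (at t)) \<and>
       lam > 0 \<and> (\<forall>t. norm (\<gamma>' t) = lam) \<and>
       (\<forall>s t. norm (\<gamma>' s - \<gamma>' t) \<le> K * \<bar>s - t\<bar>))"

end

theory Submission
  imports Defs
begin

lemma circ_radius_formula:
  fixes x y z :: "real^3"
  defines "a \<equiv> x - y" and "b \<equiv> z - y"
  assumes G: "(a \<bullet> a) * (b \<bullet> b) - (a \<bullet> b)^2 \<noteq> 0"
  shows "\<exists>\<rho>. circ_radius x y z = ereal \<rho> \<and> \<rho> \<ge> 0 \<and>
     4 * \<rho>^2 * ((a \<bullet> a) * (b \<bullet> b) - (a \<bullet> b)^2) = (a \<bullet> a) * (b \<bullet> b) * ((a - b) \<bullet> (a - b))"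
proof -
  define A where "A = a \<bullet> a"
  define B where "B = b \<bullet> b"
  define D where "D = a \<bullet> b"
  define Gm where "Gm = A * B - D^2"
  have Gm: "Gm \<noteq> 0" using G by (simp add: Gm_def A_def B_def D_def)
  have ncol: "\<not> collinear {x, y, z}"
  proof
    assume "collinear {x,y,z}"
    then have "collinear {0, a, b}" using collinear_3[of x y z] by (simp add: a_def b_def)
    then have "\<bar>a \<bullet> b\<bar> = norm a * norm b" using norm_cauchy_schwarz_equal by blast
    then have "(a \<bullet> b)^2 = (norm a)^2 * (norm b)^2" by (metis power2_abs power_mult_distrib)
    then show False using G by (simp add: power2_norm_eq_inner)
  qed
  have key: "\<rho> \<ge> 0 \<and> 4 * \<rho>^2 * Gm = A * B * ((a - b) \<bullet> (a - b))"
    if c: "c \<in> affine hull {x, y, z}" "dist c x = \<rho>" "dist c y = \<rho>" "dist c z = \<rho>" for c \<rho>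
  proof -
    obtain u v w where uvw: "c = u *\<^sub>R x + v *\<^sub>R y + w *\<^sub>R z" "u + v + w = 1"
      using c(1) by (auto simp: affine_hull_3)
    define q where "q = c - y"
    have v: "v = 1 - u - w" using uvw(2) by simp
    have q: "q = u *\<^sub>R a + w *\<^sub>R b"
      using uvw(1) unfolding v q_def a_def b_def by (simp add: scaleR_diff_left scaleR_diff_right)
    have r0: "q \<bullet> q = \<rho>^2" using c(3) by (simp add: q_def dist_norm power2_norm_eq_inner[symmetric] norm_minus_commute)
    have r1: "(q - a) \<bullet> (q - a) = \<rho>^2" using c(2) by (simp add: q_def a_def dist_norm power2_norm_eq_inner[symmetric] norm_minus_commute)
    have r2: "(q - b) \<bullet> (q - b) = \<rho>^2" using c(4) by (simp add: q_def b_def dist_norm power2_norm_eq_inner[symmetric] norm_minus_commute)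
    have e1: "2 * (q \<bullet> a) = A" using r0 r1 by (simp add: A_def inner_diff_left inner_diff_right inner_commute)
    have e2: "2 * (q \<bullet> b) = B" using r0 r2 by (simp add: B_def inner_diff_left inner_diff_right inner_commute)
    have qa: "q \<bullet> a = u * A + w * D" by (simp add: q A_def D_def inner_add_left inner_commute[of b a])
    have qb: "q \<bullet> b = u * D + w * B" by (simp add: q B_def D_def inner_add_left)
    have qq: "q \<bullet> q = u * (q \<bullet> a) + w * (q \<bullet> b)" by (simp add: q inner_add_right)
    have ab: "(a - b) \<bullet> (a - b) = A + B - 2 * D"
      by (simp add: A_def B_def D_def inner_diff_left inner_diff_right inner_commute)
    have s1: "2 * u * Gm = B * (A - D)"
    proof -
      have "B*(2*(u*A+w*D)) - D*(2*(u*D+w*B)) = B*A - D*B" using e1 e2 unfolding qa qb by simp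
      then show ?thesis by (simp add: Gm_def algebra_simps power2_eq_square)
    qed
    have s2: "2 * w * Gm = A * (B - D)"
    proof -
      have "A*(2*(u*D+w*B)) - D*(2*(u*A+w*D)) = A*B - D*A" using e1 e2 unfolding qa qb by simp
      then show ?thesis by (simp add: Gm_def algebra_simps power2_eq_square)
    qed
    have r: "\<rho>^2 = u*(q \<bullet> a) + w*(q \<bullet> b)" using qq r0 by simp
    have "4 * \<rho>^2 * Gm = 2 * (u * (2*(q \<bullet> a)) + w * (2*(q \<bullet> b))) * Gm" unfolding r by (simp add: algebra_simps)
    also have "\<dots> = 2 * (u * A + w * B) * Gm" unfolding e1 e2 ..
    also have "\<dots> = A * (2 * u * Gm) + B * (2 * w * Gm)" by (simp add: algebra_simps)
    also have "\<dots> = A * B * ((a - b) \<bullet> (a - b))" unfolding s1 s2 ab by (simp add: algebra_simps)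
    finally show ?thesis using c(2) by auto
  qed
  define u where "u = B * (A - D) / (2 * Gm)"
  define w where "w = A * (B - D) / (2 * Gm)"
  define c where "c = u *\<^sub>R x + (1 - u - w) *\<^sub>R y + w *\<^sub>R z"
  define q where "q = c - y"
  have q: "q = u *\<^sub>R a + w *\<^sub>R b" by (simp add: q_def c_def a_def b_def algebra_simps)
  have qa: "q \<bullet> a = u * A + w * D" by (simp add: q A_def D_def inner_add_left inner_commute[of b a])
  have qb: "q \<bullet> b = u * D + w * B" by (simp add: q B_def D_def inner_add_left)
  have e1: "2 * (q \<bullet> a) = A"
  proof -
    have n: "A*B*(A-D) + A*D*(B-D) = A*Gm" by (simp add: Gm_def algebra_simps power2_eq_square)
    have "u*A + w*D = (A*B*(A-D) + A*D*(B-D))/(2*Gm)" unfolding u_def w_def by (simp add: add_divide_distrib mult_ac)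
    then show ?thesis unfolding qa n using Gm by simp
  qed
  have e2: "2 * (q \<bullet> b) = B"
  proof -
    have n: "D*B*(A-D) + B*A*(B-D) = B*Gm" by (simp add: Gm_def algebra_simps power2_eq_square)
    have "u*D + w*B = (D*B*(A-D) + B*A*(B-D))/(2*Gm)" unfolding u_def w_def by (simp add: add_divide_distrib mult_ac)
    then show ?thesis unfolding qb n using Gm by simp
  qed
  have cin: "c \<in> affine hull {x, y, z}" unfolding affine_hull_3 c_def by force
  have dy: "dist c y = norm q" by (simp add: q_def dist_norm)
  have dx: "dist c x = norm q"
  proof -
    have "(norm (q - a))^2 = (norm q)^2"
      using e1 by (simp add: power2_norm_eq_inner inner_diff_left inner_diff_right inner_commute A_def)
    then have "norm (q - a) = norm q" by simp
    then show ?thesis by (simp add: q_def a_def dist_norm)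
  qed
  have dz: "dist c z = norm q"
  proof -
    have "(norm (q - b))^2 = (norm q)^2"
      using e2 by (simp add: power2_norm_eq_inner inner_diff_left inner_diff_right inner_commute B_def)
    then have "norm (q - b) = norm q" by simp
    then show ?thesis by (simp add: q_def b_def dist_norm)
  qed
  have ex: "\<exists>c. c \<in> affine hull {x, y, z} \<and> dist c x = norm q \<and> dist c y = norm q \<and> dist c z = norm q"
    using cin dx dy dz by blast
  have uniq: "\<rho> = norm q" if "\<exists>c. c \<in> affine hull {x, y, z} \<and> dist c x = \<rho> \<and> dist c y = \<rho> \<and> dist c z = \<rho>" for \<rho>
  proof -
    from that obtain c' where "c' \<in> affine hull {x, y, z}" "dist c' x = \<rho>" "dist c' y = \<rho>" "dist c' z = \<rho>" by blast
    from key[OF this] have k1: "\<rho> \<ge> 0" "4 * \<rho>^2 * Gm = A * B * ((a - b) \<bullet> (a - b))" by auto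
    from key[OF cin dx dy dz] have k2: "4 * (norm q)^2 * Gm = A * B * ((a - b) \<bullet> (a - b))" by auto
    have "\<rho>^2 * Gm = (norm q)^2 * Gm" using k1(2) k2 by linarith
    then have "\<rho>^2 = (norm q)^2" using Gm by simp
    then show ?thesis using k1(1) by (simp add: power2_eq_iff_nonneg)
  qed
  have "(THE \<rho>. \<exists>c. c \<in> affine hull {x, y, z} \<and> dist c x = \<rho> \<and> dist c y = \<rho> \<and> dist c z = \<rho>) = norm q"
    using ex uniq by (rule the_equality)
  then have "circ_radius x y z = ereal (norm q)" using ncol by (simp add: circ_radius_def)
  moreover have "4 * (norm q)^2 * Gm = A * B * ((a - b) \<bullet> (a - b))" using key[OF cin dx dy dz] by auto
  ultimately show ?thesis unfolding Gm_def A_def B_def D_def by auto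
qed

definition sd :: "real^3 \<Rightarrow> real^3 \<Rightarrow> real" where
  "sd u v = sqrt (1 - (u \<bullet> v)^2)"

lemma sd_sym: "sd u v = sd v u" by (simp add: sd_def inner_commute)
lemma sd_neg1: "sd (-u) v = sd u v" by (simp add: sd_def)
lemma sd_neg2: "sd u (-v) = sd u v" by (simp add: sd_def)

lemma inner_unit_bound: "norm u = 1 \<Longrightarrow> norm v = 1 \<Longrightarrow> (u \<bullet> v)^2 \<le> 1"
proof -
  assume "norm u = 1" "norm v = 1"
  then have "\<bar>u \<bullet> v\<bar> \<le> 1" using Cauchy_Schwarz_ineq2[of u v] by simp
  then show ?thesis by (metis abs_square_le_1)
qed

lemma sd_nonneg: "norm u = 1 \<Longrightarrow> norm v = 1 \<Longrightarrow> sd u v \<ge> 0"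
  using inner_unit_bound[of u v] by (simp add: sd_def)

lemma sd_proj:
  assumes "norm p = 1" "norm r = 1"
  shows "norm (r - (r \<bullet> p) *\<^sub>R p) = sd p r" and "sd p r \<le> norm (r - t *\<^sub>R p)"
proof -
  have pp: "p \<bullet> p = 1" "r \<bullet> r = 1" using assms by (simp_all add: norm_eq_1)
  have "(r - (r \<bullet> p) *\<^sub>R p) \<bullet> (r - (r \<bullet> p) *\<^sub>R p) = 1 - (p \<bullet> r)^2"
    by (simp add: inner_diff_left inner_diff_right pp inner_commute power2_eq_square)
  then have "(norm (r - (r \<bullet> p) *\<^sub>R p))^2 = 1 - (p \<bullet> r)^2" by (simp add: power2_norm_eq_inner)
  then show 1: "norm (r - (r \<bullet> p) *\<^sub>R p) = sd p r" unfolding sd_def by (metis norm_ge_zero real_sqrt_unique)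
  have "(r - t *\<^sub>R p) \<bullet> (r - t *\<^sub>R p) = 1 - 2 * t * (p \<bullet> r) + t^2"
    by (simp add: inner_diff_left inner_diff_right pp inner_commute power2_eq_square)
  then have "(norm (r - t *\<^sub>R p))^2 = 1 - 2 * t * (p \<bullet> r) + t^2" by (simp add: power2_norm_eq_inner)
  also have "\<dots> \<ge> 1 - (p \<bullet> r)^2" by (smt (verit) sum_power2_ge_zero power2_diff)
  finally have "sqrt (1 - (p \<bullet> r)^2) \<le> sqrt ((norm (r - t *\<^sub>R p))^2)" by (rule real_sqrt_le_mono)
  then show "sd p r \<le> norm (r - t *\<^sub>R p)" by (simp add: sd_def)
qed

lemma sd_tri:
  assumes p: "norm p = 1" and q: "norm q = 1" and r: "norm r = 1"
  shows "sd p r \<le> sd p q + sd q r"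
proof -
  define l where "l = q \<bullet> r"
  define m where "m = q \<bullet> p"
  have l: "\<bar>l\<bar> \<le> 1" using Cauchy_Schwarz_ineq2[of q r] q r by (simp add: l_def)
  have "sd p r \<le> norm (r - (l * m) *\<^sub>R p)" by (rule sd_proj(2)[OF p r])
  also have "r - (l * m) *\<^sub>R p = (r - l *\<^sub>R q) + l *\<^sub>R (q - m *\<^sub>R p)"
    by (simp add: algebra_simps)
  also have "norm \<dots> \<le> norm (r - l *\<^sub>R q) + norm (l *\<^sub>R (q - m *\<^sub>R p))" by (rule norm_triangle_ineq)
  also have "norm (r - l *\<^sub>R q) = sd q r" using sd_proj(1)[OF q r] by (simp add: l_def inner_commute)
  also have "norm (l *\<^sub>R (q - m *\<^sub>R p)) = \<bar>l\<bar> * sd p q"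
    unfolding m_def using sd_proj(1)[OF p q] by simp
  also have "\<bar>l\<bar> * sd p q \<le> sd p q" using l sd_nonneg[OF p q] by (simp add: mult_left_le_one_le)
  finally show ?thesis by simp
qed

lemma norm_secant: "x \<noteq> y \<Longrightarrow> norm (secant x y) = 1"
  by (simp add: secant_def)

lemma secant_swap: "secant y x = - secant x y"
  by (simp add: secant_def norm_minus_commute) (metis minus_diff_eq scaleR_minus_right)

lemma rp2_sd: "norm u = 1 \<Longrightarrow> norm v = 1 \<Longrightarrow> rp2_dist u v = sd u v"
proof -
  assume u: "norm u = 1" and v: "norm v = 1"
  have "\<bar>u \<bullet> v\<bar> \<le> 1" using Cauchy_Schwarz_ineq2[of u v] u v by simp
  then show ?thesis unfolding rp2_dist_def sd_def using u v by (simp add: sin_arccos)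
qed

lemma thick_le:
  assumes "thickness L = ereal \<tau>" "x \<in> L" "y \<in> L" "z \<in> L" "x \<noteq> y" "y \<noteq> z" "x \<noteq> z"
  shows "ereal \<tau> \<le> circ_radius x y z"
proof -
  have "thickness L \<le> circ_radius x y z" unfolding thickness_def
    by (rule Inf_lower) (use assms in blast)
  then show ?thesis using assms(1) by simp
qed

lemma F1:
  assumes th: "thickness L = ereal \<tau>" and tau: "\<tau> > 0"
    and L: "x \<in> L" "y \<in> L" "z \<in> L" and ne: "x \<noteq> y" "z \<noteq> y"
  shows "sd (secant x y) (secant z y) \<le> dist x z / (2 * \<tau>)"
proof (cases "x = z")
  case True
  have "secant x y \<bullet> secant x y = 1" using norm_secant[OF ne(1)] by (simp add: norm_eq_1)
  then show ?thesis using True by (simp add: sd_def)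
next
  case False
  note xz = False
  define a where "a = x - y"
  define b where "b = z - y"
  define A where "A = a \<bullet> a"
  define B where "B = b \<bullet> b"
  define D where "D = a \<bullet> b"
  define Gm where "Gm = A * B - D^2"
  have a0: "a \<noteq> 0" and b0: "b \<noteq> 0" using ne by (auto simp: a_def b_def)
  have A: "A = (norm a)^2" and B: "B = (norm b)^2" by (simp_all add: A_def B_def power2_norm_eq_inner)
  have Apos: "A > 0" "B > 0" using a0 b0 A B by auto
  have "\<bar>D\<bar> \<le> norm a * norm b" unfolding D_def by (rule Cauchy_Schwarz_ineq2)
  then have "D^2 \<le> (norm a * norm b)^2" by (metis abs_ge_zero power2_abs power_mono)
  then have G0: "Gm \<ge> 0" by (simp add: Gm_def A B power_mult_distrib)
  have amb: "a - b = x - z" by (simp add: a_def b_def)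
  have dxz: "(dist x z)^2 = (a - b) \<bullet> (a - b)" by (simp add: amb dist_norm power2_norm_eq_inner)
  have main: "4 * \<tau>^2 * Gm \<le> A * B * (dist x z)^2"
  proof (cases "Gm = 0")
    case True
    then show ?thesis using Apos by simp
  next
    case False
    from circ_radius_formula[of x y z] False obtain \<rho> where
      r: "circ_radius x y z = ereal \<rho>" "\<rho> \<ge> 0" "4 * \<rho>^2 * Gm = A * B * ((a - b) \<bullet> (a - b))"
      unfolding Gm_def A_def B_def D_def a_def b_def by blast
    have "ereal \<tau> \<le> ereal \<rho>" using thick_le[OF th L(1) L(2) L(3) ne(1)] ne xz r(1) by auto
    then have "\<tau> \<le> \<rho>" by simp
    then have "\<tau>^2 \<le> \<rho>^2" using tau by (simp add: power_mono)
    then have "4 * \<tau>^2 * Gm \<le> 4 * \<rho>^2 * Gm" using G0 by (simp add: mult_right_mono)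
    then show ?thesis using r(3) dxz by simp
  qed
  have ss: "secant x y \<bullet> secant z y = D / (norm a * norm b)"
    by (simp add: secant_def a_def b_def D_def divide_inverse mult_ac)
  have "(D / (norm a * norm b))^2 = D^2 / (A*B)" by (simp add: A B power_divide power_mult_distrib)
  then have "1 - (secant x y \<bullet> secant z y)^2 = (A*B - D^2) / (A * B)"
    unfolding ss using Apos by (simp add: diff_divide_distrib)
  also have "\<dots> = Gm / (A * B)" by (simp add: Gm_def)
  also have "\<dots> \<le> (dist x z / (2 * \<tau>))^2"
  proof -
    have "Gm / (A * B) = (4 * \<tau>^2 * Gm) / (4 * \<tau>^2 * (A * B))" using tau by simp
    also have "\<dots> \<le> (A * B * (dist x z)^2) / (4 * \<tau>^2 * (A * B))"
      using main Apos tau by (intro divide_right_mono) auto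
    also have "\<dots> = (dist x z / (2 * \<tau>))^2" using Apos by (simp add: power_divide power_mult_distrib)
    finally show ?thesis .
  qed
  finally have "sd (secant x y) (secant z y) \<le> sqrt ((dist x z / (2 * \<tau>))^2)"
    unfolding sd_def by (rule real_sqrt_le_mono)
  then show ?thesis using tau by simp
qed

lemma F_general:
  assumes th: "thickness L = ereal \<tau>" and tau: "\<tau> > 0"
    and L: "x \<in> L" "y \<in> L" "x' \<in> L" "y' \<in> L" and ne: "x \<noteq> y" "x' \<noteq> y'"
  shows "sd (secant x y) (secant x' y') \<le> (dist x x' + dist y y') / (2 * \<tau>)"
proof -
  have u: "\<And>p q. p \<noteq> q \<Longrightarrow> norm (secant p q) = 1" by (rule norm_secant)
  show ?thesis
  proof (cases "x' = y")
    case False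
    have "sd (secant x y) (secant x' y') \<le> sd (secant x y) (secant x' y) + sd (secant x' y) (secant x' y')"
      by (rule sd_tri) (use ne False in \<open>auto intro: u\<close>)
    also have "sd (secant x y) (secant x' y) \<le> dist x x' / (2 * \<tau>)"
      by (rule F1[OF th tau L(1,2,3) ne(1) False])
    also have "sd (secant x' y) (secant x' y') = sd (secant y x') (secant y' x')"
      by (simp add: secant_swap[of x' y] secant_swap[of x' y'] sd_neg1 sd_neg2)
    also have "\<dots> \<le> dist y y' / (2 * \<tau>)"
      by (rule F1[OF th tau L(2,3,4)]) (use ne False in auto)
    finally show ?thesis by (simp add: add_divide_distrib)
  next
    case True
    show ?thesis
    proof (cases "x = y'")
      case True2: True
      have "secant x' y' = secant y x" using True True2 by simp
      also have "\<dots> = - secant x y" by (rule secant_swap)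
      finally have "secant x' y' = - secant x y" .
      moreover have "secant x y \<bullet> secant x y = 1" using u[OF ne(1)] by (simp add: norm_eq_1)
      ultimately have "sd (secant x y) (secant x' y') = 0" by (simp add: sd_def)
      then show ?thesis using tau by simp
    next
      case False
      have "sd (secant x y) (secant x' y') \<le> sd (secant x y) (secant x y') + sd (secant x y') (secant x' y')"
        by (rule sd_tri) (use ne False in \<open>auto intro: u\<close>)
      also have "sd (secant x y) (secant x y') = sd (secant y x) (secant y' x)"
        by (simp add: secant_swap[of x y] secant_swap[of x y'] sd_neg1 sd_neg2)
      also have "\<dots> \<le> dist y y' / (2 * \<tau>)"
        by (rule F1[OF th tau L(2,1,4)]) (use ne False in auto)
      also have "sd (secant x y') (secant x' y') \<le> dist x x' / (2 * \<tau>)"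
        by (rule F1[OF th tau L(1,4,3)]) (use ne False in auto)
      finally show ?thesis by (simp add: add_divide_distrib)
    qed
  qed
qed

lemma path_length_ge: "ereal (dist (pathstart g) (pathfinish g)) \<le> path_length g"
proof -
  define t :: "nat \<Rightarrow> real" where "t = (\<lambda>i. if i = 0 then 0 else 1)"
  have "ereal (\<Sum>i<1. norm (g (t (Suc i)) - g (t i))) \<le> path_length g"
    unfolding path_length_def
    apply (rule Sup_upper)
    apply (simp only: mem_Collect_eq)
    apply (rule exI[of _ "1::nat"], rule exI[of _ t])
    by (simp add: t_def)
  then show ?thesis
    by (simp add: t_def pathstart_def pathfinish_def dist_norm norm_minus_commute)
qed

lemma arc_dist_ge: "ereal (dist x y) \<le> arc_dist L x y"
  unfolding arc_dist_def
  by (rule Inf_greatest) (auto intro: order.trans[OF _ path_length_ge])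

lemma part1:
  assumes th: "thickness L = ereal \<tau>" and tau: "\<tau> > 0"
  shows "\<forall>x\<in>L. \<forall>y\<in>L. \<forall>x'\<in>L. \<forall>y'\<in>L. x \<noteq> y \<longrightarrow> x' \<noteq> y' \<longrightarrow>
            ereal (rp2_dist (secant x y) (secant x' y'))
              \<le> ereal (1 / (2 * \<tau>)) * (arc_dist L x x' + arc_dist L y y')"
proof (intro ballI impI)
  fix x y x' y' assume L: "x \<in> L" "y \<in> L" "x' \<in> L" "y' \<in> L" and ne: "x \<noteq> y" "x' \<noteq> y'"
  have "rp2_dist (secant x y) (secant x' y') = sd (secant x y) (secant x' y')"
    using ne by (simp add: rp2_sd norm_secant)
  also have "\<dots> \<le> (dist x x' + dist y y') / (2 * \<tau>)" by (rule F_general[OF th tau L ne])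
  finally have "ereal (rp2_dist (secant x y) (secant x' y')) \<le> ereal (1 / (2 * \<tau>)) * (ereal (dist x x') + ereal (dist y y'))"
    by simp
  also have "\<dots> \<le> ereal (1 / (2 * \<tau>)) * (arc_dist L x x' + arc_dist L y y')"
  proof (rule ereal_mult_left_mono)
    show "ereal (dist x x') + ereal (dist y y') \<le> arc_dist L x x' + arc_dist L y y'"
      by (intro add_mono arc_dist_ge)
  qed (use tau in simp)
  finally show "ereal (rp2_dist (secant x y) (secant x' y')) \<le> ereal (1 / (2 * \<tau>)) * (arc_dist L x x' + arc_dist L y y')" .
qed
lemma sorted_le_last: "sorted xs \<Longrightarrow> x \<in> set xs \<Longrightarrow> x \<le> last xs"
proof (induction xs)
  case Nil then show ?case by simp
next
  case (Cons y ys)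
  show ?case
  proof (cases "ys = []")
    case True then show ?thesis using Cons by simp
  next
    case False
    have "last ys \<in> set ys" using False by simp
    then have "y \<le> last ys" using Cons(2) by simp
    moreover have "x = y \<or> x \<in> set ys" using Cons(3) by simp
    ultimately show ?thesis using Cons False by auto
  qed
qed

lemma sorted_hd_le: "sorted xs \<Longrightarrow> x \<in> set xs \<Longrightarrow> hd xs \<le> x"
  by (cases xs) auto

locale thick_loop =
  fixes G :: "real \<Rightarrow> real^3" and \<tau> :: real
  assumes tau: "\<tau> > 0"
    and contG: "continuous_on UNIV G"
    and perG: "\<And>t. G (t + 1) = G t"
    and injG: "\<And>s t. \<bar>s - t\<bar> < 1 \<Longrightarrow> G s = G t \<Longrightarrow> s = t"
    and FG: "\<And>x y x' y'. x \<in> range G \<Longrightarrow> y \<in> range G \<Longrightarrow> x' \<in> range G \<Longrightarrow> y' \<in> range G \<Longrightarrow>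
        x \<noteq> y \<Longrightarrow> x' \<noteq> y' \<Longrightarrow> sd (secant x y) (secant x' y') \<le> (dist x x' + dist y y') / (2 * \<tau>)"
begin

fun chords :: "real list \<Rightarrow> real" where
  "chords (a # b # xs) = dist (G a) (G b) + chords (b # xs)"
| "chords _ = 0"

definition part :: "real \<Rightarrow> real \<Rightarrow> real list \<Rightarrow> bool" where
  "part a b xs \<longleftrightarrow> xs \<noteq> [] \<and> hd xs = a \<and> last xs = b \<and> sorted xs"

lemma chords_nonneg: "chords xs \<ge> 0"
  by (induction xs rule: chords.induct) auto

lemma chords_Cons2: "chords (a # xs) = (if xs = [] then 0 else dist (G a) (G (hd xs)) + chords xs)"
  by (cases xs) auto

lemma chords_append: "ys \<noteq> [] \<Longrightarrow> chords (xs @ ys) = chords (xs @ [hd ys]) + chords ys"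
proof (induction xs rule: chords.induct)
  case (1 a b xs)
  then show ?case by simp
next
  case ("2_1")
  then show ?case by simp
next
  case ("2_2" a)
  then show ?case by (cases ys) auto
qed


lemma part_concat:
  assumes "part a b xs" "part b c ys"
  shows "part a c (xs @ tl ys)" "chords (xs @ tl ys) = chords xs + chords ys"
proof -
  obtain y ys' where ys: "ys = y # ys'" using assms(2) unfolding part_def by (cases ys) auto
  have y: "y = b" using assms(2) ys by (simp add: part_def)
  have lx: "last xs = b" "xs \<noteq> []" "hd xs = a" "sorted xs" using assms(1) by (auto simp: part_def)
  have sy: "sorted (b # ys')" "last (b # ys') = c" using assms(2) ys y by (auto simp: part_def)
  then obtain xs' where xs': "xs = xs' @ [b]" using lx by (metis append_butlast_last_id)
  have srt: "sorted (xs @ ys')"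
  proof -
    have "\<forall>x\<in>set xs. \<forall>z\<in>set ys'. x \<le> z"
    proof (intro ballI)
      fix x z assume "x \<in> set xs" "z \<in> set ys'"
      then have "x \<le> b" "b \<le> z" using sorted_le_last[OF lx(4)] lx(1) sy(1) by auto
      then show "x \<le> z" by simp
    qed
    then show ?thesis using lx(4) sy(1) by (simp add: sorted_append)
  qed
  have hd: "hd (xs @ ys') = a" using lx by simp
  have lst: "last (xs @ ys') = c" using sy lx by (cases "ys' = []") auto
  show "part a c (xs @ tl ys)" unfolding part_def ys using srt hd lst lx(2) by simp
  show "chords (xs @ tl ys) = chords xs + chords ys"
  proof (cases ys')
    case Nil
    then show ?thesis using ys by simp
  next
    case (Cons z zs)
    have "chords (xs @ tl ys) = chords (xs' @ [b, z] @ zs)" using xs' ys Cons by simp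
    also have "\<dots> = chords (xs' @ [b]) + chords (b # z # zs)"
      using chords_append[of "b # z # zs" xs'] by simp
    finally show ?thesis using xs' ys Cons y by simp
  qed
qed

lemma part_single_aux: "sorted (x # xs) \<Longrightarrow> last (x # xs) = x \<Longrightarrow> chords (x # xs) = 0"
proof (induction xs arbitrary: x)
  case Nil then show ?case by simp
next
  case (Cons y ys)
  have "y \<le> last (y # ys)" using sorted_le_last[of "y # ys" y] Cons(2) by simp
  then have "y = x" using Cons(2,3) by simp
  then show ?case using Cons by simp
qed

lemma part_single: "part a a xs \<Longrightarrow> chords xs = 0"
  unfolding part_def by (cases xs) (auto intro: part_single_aux)

lemma chords_ge: "part a b xs \<Longrightarrow> dist (G a) (G b) \<le> chords xs"
proof (induction xs arbitrary: a rule: chords.induct)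
  case (1 x y xs)
  have "part y b (y # xs)" using 1(2) by (auto simp: part_def)
  then have "dist (G y) (G b) \<le> chords (y # xs)" by (rule 1(1))
  moreover have "x = a" using 1(2) by (simp add: part_def)
  ultimately show ?case using dist_triangle[of "G a" "G b" "G y"] by simp
next
  case ("2_1" a)
  then show ?case by (simp add: part_def)
next
  case ("2_2" x)
  then show ?case by (auto simp: part_def)
qed

lemma part_split:
  assumes "part a c xs" "a \<le> b" "b \<le> c"
  shows "\<exists>ys zs. part a b ys \<and> part b c zs \<and> chords xs \<le> chords ys + chords zs"
  using assms
proof (induction xs arbitrary: a rule: chords.induct)
  case (1 x y xs)
  have x: "x = a" using 1(2) by (simp add: part_def)
  show ?case
  proof (cases "b \<le> y")
    case True
    have p1: "part a b [a, b]" using 1(3) by (simp add: part_def)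
    have p2: "part b c (b # y # xs)" using 1(2) True by (auto simp: part_def)
    have "chords (x # y # xs) \<le> chords [a, b] + chords (b # y # xs)"
      using x dist_triangle[of "G a" "G y" "G b"] by simp
    then show ?thesis using p1 p2 by blast
  next
    case False
    have py: "part y c (y # xs)" using 1(2) by (auto simp: part_def)
    from 1(1)[OF py _ 1(4)] False obtain ys zs where
      h: "part y b ys" "part b c zs" "chords (y # xs) \<le> chords ys + chords zs" by auto
    obtain ys' where ys': "ys = y # ys'" using h(1) by (cases ys) (auto simp: part_def)
    have "part a b (a # ys)" using h(1) 1(2) x ys' by (auto simp: part_def)
    moreover have "chords (x # y # xs) \<le> chords (a # ys) + chords zs" using h(3) x ys' by simp
    ultimately show ?thesis using h(2) by blast
  qed
next
  case ("2_1" a)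
  then show ?case by (simp add: part_def)
next
  case ("2_2" x)
  then have "a = c" "b = a" by (auto simp: part_def)
  then show ?case using "2_2" by (rule_tac x="[a]" in exI, rule_tac x="[a]" in exI) (auto simp: part_def)
qed

end

context thick_loop
begin

lemma inner_secant: "x \<noteq> y \<Longrightarrow> (x - y) \<bullet> secant x y = norm (x - y)"
proof -
  assume "x \<noteq> y"
  then have n: "norm (x - y) \<noteq> 0" by simp
  have "(x - y) \<bullet> secant x y = ((x - y) \<bullet> (x - y)) / norm (x - y)" by (simp add: secant_def divide_inverse mult.commute)
  also have "\<dots> = (norm (x - y))^2 / norm (x - y)" by (simp add: power2_norm_eq_inner)
  also have "\<dots> = norm (x - y)" using n by (simp add: power2_eq_square)
  finally show ?thesis .
qed

lemma G_nat: "G (t + real n) = G t"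
proof (induction n)
  case 0 then show ?case by simp
next
  case (Suc n)
  have "G (t + real (Suc n)) = G ((t + real n) + 1)" by (simp add: algebra_simps)
  also have "\<dots> = G (t + real n)" by (rule perG)
  finally show ?case using Suc by simp
qed

lemma G_int: "G (t + real_of_int n) = G t"
proof (cases "n \<ge> 0")
  case True
  then show ?thesis using G_nat[of t "nat n"] by simp
next
  case False
  have "G (t + real_of_int n + real (nat (-n))) = G (t + real_of_int n)" by (rule G_nat)
  moreover have "t + real_of_int n + real (nat (-n)) = t" using False by simp
  ultimately show ?thesis by simp
qed

lemma chords_shift: "chords (map (\<lambda>t. t + real_of_int n) xs) = chords xs"
  by (induction xs rule: chords.induct) (auto simp: G_int)

lemma part_shift: "part a b xs \<Longrightarrow> part (a + c) (b + c) (map (\<lambda>t. t + c) xs)"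
  unfolding part_def by (auto simp: hd_map last_map sorted_map)

lemma chords_proj:
  assumes "\<And>t1 t2. t1 \<in> set xs \<Longrightarrow> t2 \<in> set xs \<Longrightarrow> t1 \<le> t2 \<Longrightarrow> k * norm (G t2 - G t1) \<le> (G t2 - G t1) \<bullet> E"
    and "sorted xs" "xs \<noteq> []"
  shows "k * chords xs \<le> (G (last xs) - G (hd xs)) \<bullet> E"
  using assms
proof (induction xs rule: chords.induct)
  case (1 x y xs)
  have ih: "k * chords (y # xs) \<le> (G (last (y # xs)) - G y) \<bullet> E"
  proof -
    have "k * chords (y # xs) \<le> (G (last (y # xs)) - G (hd (y # xs))) \<bullet> E"
    proof (rule "1.IH")
      fix t1 t2 assume "t1 \<in> set (y # xs)" "t2 \<in> set (y # xs)" "t1 \<le> t2"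
      then show "k * norm (G t2 - G t1) \<le> (G t2 - G t1) \<bullet> E" using 1(2)[of t1 t2] by simp
    next
      show "sorted (y # xs)" using 1(3) by simp
    qed simp
    then show ?thesis by simp
  qed
  have "k * dist (G x) (G y) \<le> (G y - G x) \<bullet> E"
    using 1(2)[of x y] 1(3) by (simp add: dist_norm norm_minus_commute)
  then have "k * chords (x # y # xs) \<le> (G y - G x) \<bullet> E + (G (last (y # xs)) - G y) \<bullet> E"
    using ih by (simp add: distrib_left)
  also have "\<dots> = (G (last (x # y # xs)) - G (hd (x # y # xs))) \<bullet> E"
    by (simp add: inner_diff_left)
  finally show ?case .
next
  case ("2_1")
  then show ?case by simp
next
  case ("2_2" x)
  then show ?case by simp
qed

lemma local_mono:
  assumes ab: "a < b" "b - a < 1" and rho: "\<forall>t\<in>{a..b}. dist (G t) (G a) \<le> \<rho>"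
    and kap: "3 * \<rho> / (2 * \<tau>) \<le> 1 / 2"
    and t: "a \<le> t1" "t1 \<le> t2" "t2 \<le> b"
  shows "sqrt (1 - (3 * \<rho> / (2 * \<tau>))^2) * norm (G t2 - G t1) \<le> (G t2 - G t1) \<bullet> secant (G b) (G a)"
proof -
  define \<kappa> where "\<kappa> = 3 * \<rho> / (2 * \<tau>)"
  define k where "k = sqrt (1 - \<kappa>^2)"
  define E where "E = secant (G b) (G a)"
  define u where "u t = (G t - G a) \<bullet> E" for t
  have rho0: "\<rho> \<ge> 0" using rho ab by (metis atLeastAtMost_iff dist_self less_eq_real_def)
  have kap0: "\<kappa> \<ge> 0" "\<kappa> \<le> 1/2" using rho0 tau kap by (auto simp: \<kappa>_def)
  have kpos: "k > 0" unfolding k_def using kap0 by (simp add: power2_le_iff_abs_le abs_square_less_1)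
  have Gab: "G b \<noteq> G a" using injG[of b a] ab by auto
  have inrange: "\<And>t. G t \<in> range G" by simp
  have claim1: "k * norm (G t' - G t) \<le> \<bar>u t' - u t\<bar>" if tt: "t \<in> {a..b}" "t' \<in> {a..b}" "t \<noteq> t'" for t t'
  proof -
    have "\<bar>t' - t\<bar> < 1" using tt ab by (auto simp: abs_if)
    then have ne: "G t' \<noteq> G t" using injG[of t' t] tt by auto
    have d1: "dist (G t') (G b) \<le> 2 * \<rho>"
      using rho tt ab dist_triangle[of "G t'" "G b" "G a"] by (smt (verit, best) atLeastAtMost_iff dist_commute)
    have d2: "dist (G t) (G a) \<le> \<rho>" using rho tt by auto
    have "sd (secant (G t') (G t)) E \<le> (dist (G t') (G b) + dist (G t) (G a)) / (2 * \<tau>)"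
      unfolding E_def by (rule FG) (use ne Gab in auto)
    also have "\<dots> \<le> (3 * \<rho>) / (2 * \<tau>)" using d1 d2 tau by (intro divide_right_mono) auto
    finally have sdk: "sd (secant (G t') (G t)) E \<le> \<kappa>" by (simp add: \<kappa>_def)
    define c where "c = secant (G t') (G t) \<bullet> E"
    have h: "sqrt (1 - c^2) \<le> \<kappa>" using sdk by (simp add: sd_def c_def)
    have "1 - c^2 \<le> \<kappa>^2"
    proof (cases "1 - c^2 \<le> 0")
      case True then show ?thesis by (meson order_trans zero_le_power2)
    next
      case False
      have "(sqrt (1 - c^2))^2 \<le> \<kappa>^2" using False by (intro power_mono[OF h]) auto
      moreover have "0 \<le> 1 - c^2" using False by simp
      ultimately show ?thesis by (simp only: real_sqrt_pow2)
    qed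
    then have "1 - \<kappa>^2 \<le> c^2" by simp
    then have "k \<le> sqrt (c^2)" unfolding k_def by (rule real_sqrt_le_mono)
    then have kc: "k \<le> \<bar>c\<bar>" by simp
    have "u t' - u t = (G t' - G t) \<bullet> E" by (simp add: u_def inner_diff_left)
    also have "\<dots> = norm (G t' - G t) * c"
      using ne by (simp add: c_def secant_def)
    finally have "\<bar>u t' - u t\<bar> = norm (G t' - G t) * \<bar>c\<bar>" by (simp add: abs_mult)
    moreover have "k * norm (G t' - G t) \<le> \<bar>c\<bar> * norm (G t' - G t)" using kc by (rule mult_right_mono) simp
    ultimately show ?thesis by (simp add: mult.commute)
  qed
  have injU: "inj_on u {a..b}"
  proof (rule inj_onI)
    fix t t' assume "t \<in> {a..b}" "t' \<in> {a..b}" "u t = u t'"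
    note h = this
    show "t = t'"
    proof (rule ccontr)
      assume "t \<noteq> t'"
      then have "k * norm (G t' - G t) \<le> 0" using claim1[of t t'] h by simp
      then have "norm (G t' - G t) \<le> 0" using kpos by (simp add: mult_le_0_iff)
      then have "G t' = G t" by simp
      moreover have "\<bar>t' - t\<bar> < 1" using h ab by (auto simp: abs_if)
      ultimately show False using injG[of t' t] \<open>t \<noteq> t'\<close> by auto
    qed
  qed
  have contU: "continuous_on {a..b} u"
    unfolding u_def by (intro continuous_intros continuous_on_subset[OF contG]) auto
  have ua: "u a = 0" by (simp add: u_def)
  have ub: "u b > 0" using Gab by (simp add: u_def E_def inner_secant)
  have inc1: "u a < u t" if "a < t" "t \<le> b" for t
  proof (cases "t = b")
    case True then show ?thesis using ua ub by simp
  next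
    case False
    then have "a < t" "t < b" using that by auto
    from continuous_inj_imp_mono[OF this contU injU] show ?thesis using ua ub by auto
  qed
  have inc: "u t1' < u t2'" if "a \<le> t1'" "t1' < t2'" "t2' \<le> b" for t1' t2'
  proof (cases "t1' = a")
    case True then show ?thesis using inc1 that by auto
  next
    case False
    then have x: "a < t1'" "t1' < t2'" using that by auto
    have c: "continuous_on {a..t2'} u" by (rule continuous_on_subset[OF contU]) (use that in auto)
    have i: "inj_on u {a..t2'}" by (rule inj_on_subset[OF injU]) (use that in auto)
    from continuous_inj_imp_mono[OF x c i] inc1[of t2'] that x show ?thesis by auto
  qed
  show ?thesis
  proof (cases "t1 = t2")
    case True then show ?thesis by simp
  next
    case False
    then have lt: "t1 < t2" using t by simp
    have "u t2 - u t1 > 0" using inc[OF t(1) lt t(3)] by simp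
    moreover have "k * norm (G t2 - G t1) \<le> \<bar>u t2 - u t1\<bar>" using claim1[of t1 t2] t lt by auto
    moreover have "u t2 - u t1 = (G t2 - G t1) \<bullet> E" by (simp add: u_def inner_diff_left)
    ultimately show ?thesis by (simp add: k_def \<kappa>_def E_def)
  qed
qed

lemma local_chords:
  assumes ab: "a < b" "b - a < 1" and rho: "\<forall>t\<in>{a..b}. dist (G t) (G a) \<le> \<rho>"
    and kap: "3 * \<rho> / (2 * \<tau>) \<le> 1 / 2" and p: "part a b xs"
  shows "sqrt (1 - (3 * \<rho> / (2 * \<tau>))^2) * chords xs \<le> dist (G a) (G b)"
proof -
  have sx: "sorted xs" "xs \<noteq> []" "hd xs = a" "last xs = b" using p by (auto simp: part_def)
  have inab: "t \<in> {a..b}" if "t \<in> set xs" for t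
    using sorted_hd_le[OF sx(1) that] sorted_le_last[OF sx(1) that] sx by auto
  have "sqrt (1 - (3 * \<rho> / (2 * \<tau>))^2) * chords xs \<le> (G (last xs) - G (hd xs)) \<bullet> secant (G b) (G a)"
  proof (rule chords_proj[OF _ sx(1,2)])
    fix t1 t2 assume "t1 \<in> set xs" "t2 \<in> set xs" "t1 \<le> t2"
    then have "a \<le> t1" "t1 \<le> t2" "t2 \<le> b" using inab[of t1] inab[of t2] by auto
    then show "sqrt (1 - (3 * \<rho> / (2 * \<tau>))^2) * norm (G t2 - G t1) \<le> (G t2 - G t1) \<bullet> secant (G b) (G a)"
      by (rule local_mono[OF ab rho kap])
  qed
  also have "\<dots> = dist (G a) (G b)"
  proof -
    have "G b \<noteq> G a" using injG[of b a] ab by auto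
    then show ?thesis using sx by (simp add: inner_secant dist_norm norm_minus_commute)
  qed
  finally show ?thesis .
qed

end

context thick_loop
begin

definition len :: "real \<Rightarrow> real \<Rightarrow> real" where
  "len a b = Sup {chords xs | xs. part a b xs}"

definition del :: real where
  "del = (SOME d. 0 < d \<and> d < 1 \<and> (\<forall>s t. \<bar>s - t\<bar> \<le> d \<longrightarrow> dist (G s) (G t) \<le> \<tau> / 3))"

lemma del_ex: "\<exists>d. 0 < d \<and> d < 1 \<and> (\<forall>s t. \<bar>s - t\<bar> \<le> d \<longrightarrow> dist (G s) (G t) \<le> \<tau> / 3)"
proof -
  have uc: "uniformly_continuous_on {-2..2} G"
    by (rule compact_uniformly_continuous) (auto intro: continuous_on_subset[OF contG])
  have t3: "\<tau> / 3 > 0" using tau by simp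
  obtain d where d: "d > 0" "\<And>x x'. x\<in>{-2..2} \<Longrightarrow> x'\<in>{-2..2} \<Longrightarrow> dist x' x < d \<Longrightarrow> dist (G x') (G x) < \<tau> / 3"
    using uc t3 unfolding uniformly_continuous_on_def by metis
  define d' where "d' = min (d / 2) (1 / 2)"
  have d'p: "0 < d'" "d' < d" "d' \<le> 1/2" using d(1) by (auto simp: d'_def)
  have "\<forall>s t. \<bar>s - t\<bar> \<le> d' \<longrightarrow> dist (G s) (G t) \<le> \<tau> / 3"
  proof (intro allI impI)
    fix s t assume st: "\<bar>s - t\<bar> \<le> d'"
    define n where "n = \<lfloor>s\<rfloor>"
    have fl: "real_of_int n \<le> s" "s < real_of_int n + 1" unfolding n_def by linarith+
    have st2: "s - t \<le> 1/2" "t - s \<le> 1/2" using st d'p(3) by (auto simp: abs_le_iff)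
    have s': "s - n \<in> {-2..2}" using fl by simp
    have t': "t - n \<in> {-2..2}" using fl st2 by simp
    have "dist (t - n) (s - n) < d" using st d'p(2) by (simp add: dist_real_def abs_minus_commute)
    then have "dist (G (t - n)) (G (s - n)) < \<tau> / 3" using d(2) s' t' by blast
    moreover have "G (s - n) = G s" "G (t - n) = G t" using G_int[of "s - n" n] G_int[of "t - n" n] by auto
    ultimately show "dist (G s) (G t) \<le> \<tau> / 3" by (simp add: dist_commute)
  qed
  moreover have "0 < d'" "d' < 1" using d'p by auto
  ultimately show ?thesis by blast
qed

lemma del: "0 < del" "del < 1" "\<bar>s - t\<bar> \<le> del \<Longrightarrow> dist (G s) (G t) \<le> \<tau> / 3"
  using someI_ex[OF del_ex] unfolding del_def[symmetric] by auto

lemma chords_small: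
  assumes "a \<le> b" "b - a \<le> del" "part a b xs"
  shows "chords xs \<le> 2 * dist (G a) (G b)"
proof (cases "a = b")
  case True then show ?thesis using part_single assms by simp
next
  case False
  then have ab: "a < b" "b - a < 1" using assms del by auto
  have rho: "\<forall>t\<in>{a..b}. dist (G t) (G a) \<le> \<tau> / 3"
  proof
    fix t assume "t \<in> {a..b}"
    then have "\<bar>t - a\<bar> \<le> del" using assms by auto
    then show "dist (G t) (G a) \<le> \<tau> / 3" by (rule del(3))
  qed
  have kap: "3 * (\<tau> / 3) / (2 * \<tau>) \<le> 1 / 2" using tau by simp
  have "sqrt (1 - (3 * (\<tau> / 3) / (2 * \<tau>))^2) * chords xs \<le> dist (G a) (G b)"
    by (rule local_chords[OF ab rho kap assms(3)])
  moreover have "sqrt (1 - (3 * (\<tau> / 3) / (2 * \<tau>))^2) = sqrt (3 / 4)" using tau by (simp add: power_divide)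
  moreover have "sqrt (3 / 4) \<ge> (1 / 2 :: real)" by (rule real_le_rsqrt) (simp add: power2_eq_square)
  ultimately have "(1 / 2) * chords xs \<le> dist (G a) (G b)"
    using chords_nonneg[of xs] by (smt (verit) mult_right_mono)
  then show ?thesis by simp
qed

lemma chords_bdd_N:
  "\<forall>a b xs. a \<le> b \<longrightarrow> b - a \<le> real N * del \<longrightarrow> part a b xs \<longrightarrow> chords xs \<le> real N * \<tau>"
proof (induction N)
  case 0
  then show ?case using part_single by auto
next
  case (Suc N)
  show ?case
  proof (intro allI impI)
    fix a b xs assume h: "a \<le> b" "b - a \<le> real (Suc N) * del" "part a b xs"
    show "chords xs \<le> real (Suc N) * \<tau>"
    proof (cases "b - a \<le> del")
      case True
      have "chords xs \<le> 2 * dist (G a) (G b)" by (rule chords_small[OF h(1) True h(3)])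
      also have "\<dots> \<le> 2 * (\<tau> / 3)"
      proof -
        have "\<bar>a - b\<bar> \<le> del" using True h(1) by simp
        then show ?thesis using del(3)[of a b] by simp
      qed
      also have "\<dots> \<le> real (Suc N) * \<tau>" using tau by simp
      finally show ?thesis .
    next
      case False
      obtain ys zs where yz: "part a (a + del) ys" "part (a + del) b zs" "chords xs \<le> chords ys + chords zs"
        using part_split[OF h(3), of "a + del"] False del(1) by auto
      have "chords ys \<le> 2 * dist (G a) (G (a + del))" by (rule chords_small[OF _ _ yz(1)]) (use del in auto)
      also have "\<dots> \<le> \<tau>" using del(3)[of a "a + del"] del(1) tau by simp
      finally have c1: "chords ys \<le> \<tau>" .
      have cc1: "a + del \<le> b" using False by simp
      have cc2: "b - (a + del) \<le> real N * del" using h(2) by (simp add: algebra_simps)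
      have "chords zs \<le> real N * \<tau>" using Suc.IH cc1 cc2 yz(2) by blast
      then show ?thesis using c1 yz(3) by (simp add: algebra_simps)
    qed
  qed
qed

lemma chords_bdd: "a \<le> b \<Longrightarrow> \<exists>M. \<forall>xs. part a b xs \<longrightarrow> chords xs \<le> M"
proof -
  assume ab: "a \<le> b"
  obtain N :: nat where "(b - a) / del \<le> real N" by (meson real_arch_simple)
  then have "b - a \<le> real N * del" using del(1) by (simp add: divide_le_eq)
  then show ?thesis using chords_bdd_N[of N] ab by blast
qed

lemma part_two: "a \<le> b \<Longrightarrow> part a b [a, b]"
  by (simp add: part_def)

lemma len_upper: "a \<le> b \<Longrightarrow> part a b xs \<Longrightarrow> chords xs \<le> len a b"
proof -
  assume ab: "a \<le> b" and p: "part a b xs"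
  obtain M where M: "\<forall>xs. part a b xs \<longrightarrow> chords xs \<le> M" using chords_bdd[OF ab] by blast
  have bdd: "bdd_above {chords xs | xs. part a b xs}" unfolding bdd_above_def using M by blast
  have mem: "chords xs \<in> {chords xs | xs. part a b xs}" using p by blast
  show ?thesis unfolding len_def by (rule cSup_upper[OF mem bdd])
qed

lemma len_least: "a \<le> b \<Longrightarrow> (\<And>xs. part a b xs \<Longrightarrow> chords xs \<le> M) \<Longrightarrow> len a b \<le> M"
  unfolding len_def
  by (rule cSup_least) (use part_two in auto)

lemma len_ge: "a \<le> b \<Longrightarrow> dist (G a) (G b) \<le> len a b"
  using len_upper[OF _ part_two, of a b] by simp

lemma len_nonneg: "a \<le> b \<Longrightarrow> 0 \<le> len a b"
  using len_ge[of a b] zero_le_dist[of "G a" "G b"] by linarith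

lemma len_refl: "len a a = 0"
  using len_least[of a a 0] len_nonneg[of a a] part_single by fastforce

lemma len_add:
  assumes "a \<le> b" "b \<le> c"
  shows "len a c = len a b + len b c"
proof (rule antisym)
  show "len a c \<le> len a b + len b c"
  proof (rule len_least)
    show "a \<le> c" using assms by simp
    fix xs assume "part a c xs"
    then obtain ys zs where "part a b ys" "part b c zs" "chords xs \<le> chords ys + chords zs"
      using part_split assms by blast
    then show "chords xs \<le> len a b + len b c"
      using len_upper[OF assms(1)] len_upper[OF assms(2)] by (smt (verit))
  qed
next
  have ac: "a \<le> c" using assms by simp
  have "len a b \<le> len a c - len b c"
  proof (rule len_least[OF assms(1)])
    fix ys assume ys: "part a b ys"
    have "len b c \<le> len a c - chords ys"
    proof (rule len_least[OF assms(2)])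
      fix zs assume zs: "part b c zs"
      have "chords ys + chords zs \<le> len a c"
        using part_concat[OF ys zs] len_upper[OF ac] by metis
      then show "chords zs \<le> len a c - chords ys" by simp
    qed
    then show "chords ys \<le> len a c - len b c" by simp
  qed
  then show "len a b + len b c \<le> len a c" by simp
qed

lemma len_shift: "len (a + real_of_int n) (b + real_of_int n) = len a b"
proof -
  have "{chords xs | xs. part (a + real_of_int n) (b + real_of_int n) xs} = {chords xs | xs. part a b xs}"
  proof (intro equalityI subsetI)
    fix c assume "c \<in> {chords xs | xs. part (a + real_of_int n) (b + real_of_int n) xs}"
    then obtain xs where xs: "c = chords xs" "part (a + real_of_int n) (b + real_of_int n) xs" by auto
    have p: "part a b (map (\<lambda>t. t + real_of_int (-n)) xs)"
      using part_shift[OF xs(2), of "real_of_int (-n)"] by simp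
    have q: "chords (map (\<lambda>t. t + real_of_int (-n)) xs) = chords xs" by (rule chords_shift)
    from p q xs(1) show "c \<in> {chords xs | xs. part a b xs}" by (metis (mono_tags, lifting) mem_Collect_eq)
  next
    fix c assume "c \<in> {chords xs | xs. part a b xs}"
    then obtain xs where xs: "c = chords xs" "part a b xs" by auto
    have "part (a + real_of_int n) (b + real_of_int n) (map (\<lambda>t. t + real_of_int n) xs)"
      by (rule part_shift[OF xs(2)])
    moreover have "chords (map (\<lambda>t. t + real_of_int n) xs) = chords xs" by (rule chords_shift)
    ultimately show "c \<in> {chords xs | xs. part (a + real_of_int n) (b + real_of_int n) xs}" using xs(1) by (metis (mono_tags, lifting) mem_Collect_eq)
  qed
  then show ?thesis unfolding len_def by simp
qed

lemma len_local:
  assumes ab: "a < b" "b - a < 1" and rho: "\<forall>t\<in>{a..b}. dist (G t) (G a) \<le> \<rho>"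
    and kap: "3 * \<rho> / (2 * \<tau>) \<le> 1 / 2"
  shows "sqrt (1 - (3 * \<rho> / (2 * \<tau>))^2) * len a b \<le> dist (G a) (G b)"
proof -
  define k where "k = sqrt (1 - (3 * \<rho> / (2 * \<tau>))^2)"
  have rho0: "\<rho> \<ge> 0" using rho ab by (metis atLeastAtMost_iff dist_self less_eq_real_def)
  have h: "(3 * \<rho> / (2 * \<tau>))^2 \<le> (1/2)^2" using kap rho0 tau by (intro power_mono) auto
  have "(1/2::real)^2 < 1" by (simp add: power2_eq_square)
  then have "(3 * \<rho> / (2 * \<tau>))^2 < 1" using h by linarith
  then have kpos: "k > 0" by (simp add: k_def)
  have "len a b \<le> dist (G a) (G b) / k"
  proof (rule len_least)
    show "a \<le> b" using ab by simp
    fix xs assume "part a b xs"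
    then have "k * chords xs \<le> dist (G a) (G b)" unfolding k_def by (rule local_chords[OF ab rho kap])
    then show "chords xs \<le> dist (G a) (G b) / k" using kpos by (simp add: le_divide_eq mult.commute)
  qed
  then show ?thesis using kpos by (simp add: le_divide_eq mult.commute k_def)
qed

lemma len_small: "a \<le> b \<Longrightarrow> b - a \<le> del \<Longrightarrow> len a b \<le> 2 * dist (G a) (G b)"
  by (rule len_least) (auto intro: chords_small)

end

context thick_loop
begin

definition Lam :: real where "Lam = len 0 1"
definition sig :: "real \<Rightarrow> real" where "sig t = (if 0 \<le> t then len 0 t else - len t 0)"

lemma sig_diff: "a \<le> b \<Longrightarrow> sig b - sig a = len a b"
  unfolding sig_def
  using len_add[of 0 a b] len_add[of a 0 b] len_add[of a b 0] by (auto simp: len_refl)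

lemma len_period: "len t (t + 1) = Lam"
proof -
  define n where "n = \<lfloor>t\<rfloor>"
  define f where "f = t - real_of_int n"
  have f: "0 \<le> f" "f < 1" unfolding f_def n_def by linarith+
  have "len t (t + 1) = len (f + real_of_int n) ((f + 1) + real_of_int n)" by (simp add: f_def)
  also have "\<dots> = len f (f + 1)" by (rule len_shift)
  also have "\<dots> = len f 1 + len 1 (f + 1)" using f by (intro len_add) auto
  also have "len 1 (f + 1) = len (0 + real_of_int 1) (f + real_of_int 1)" by simp
  also have "\<dots> = len 0 f" by (rule len_shift)
  also have "len f 1 + len 0 f = len 0 1" using len_add[of 0 f 1] f by simp
  finally show ?thesis by (simp add: Lam_def)
qed

lemma sig_period: "sig (t + 1) = sig t + Lam"
  using sig_diff[of t "t + 1"] len_period[of t] by simp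

lemma len_pos_small: "a < b \<Longrightarrow> b - a < 1 \<Longrightarrow> 0 < len a b"
proof -
  assume ab: "a < b" "b - a < 1"
  have "G b \<noteq> G a" using injG[of b a] ab by auto
  then have d: "0 < dist (G a) (G b)" by simp
  show ?thesis using d len_ge[of a b] ab by linarith
qed

lemma len_pos: "a < b \<Longrightarrow> 0 < len a b"
proof -
  assume ab: "a < b"
  show ?thesis
  proof (cases "b - a < 1")
    case True then show ?thesis using len_pos_small ab by simp
  next
    case False
    have "len a b = len a (a + 1/2) + len (a + 1/2) b" using False by (intro len_add) auto
    moreover have "0 < len a (a + 1/2)" by (rule len_pos_small) auto
    moreover have "0 \<le> len (a + 1/2) b" using False by (intro len_nonneg) auto
    ultimately show ?thesis by simp
  qed
qed

lemma Lam_pos: "Lam > 0"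
  unfolding Lam_def by (rule len_pos) simp

lemma sig_less: "a < b \<Longrightarrow> sig a < sig b"
  using sig_diff[of a b] len_pos[of a b] by simp

lemma sig_le: "a \<le> b \<Longrightarrow> sig a \<le> sig b"
  using sig_less[of a b] by (cases "a = b") auto

lemma sig_less_iff: "sig a < sig b \<longleftrightarrow> a < b"
  by (meson not_le sig_le sig_less)

lemma sig_le_iff: "sig a \<le> sig b \<longleftrightarrow> a \<le> b"
  by (meson not_le sig_le sig_less)

lemma sig_inj: "sig a = sig b \<longleftrightarrow> a = b"
  using sig_le_iff[of a b] sig_le_iff[of b a] by auto

lemma sig_0: "sig 0 = 0" by (simp add: sig_def len_refl)

lemma sig_1: "sig 1 = Lam" by (simp add: sig_def Lam_def)

lemma sig_cont: "isCont sig t"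
proof -
  have cG: "isCont G t" using contG by (simp add: continuous_on_eq_continuous_at)
  show ?thesis
    unfolding continuous_at_eps_delta
  proof (intro allI impI)
    fix e :: real assume e: "e > 0"
    then obtain d where d: "d > 0" "\<forall>x. dist x t < d \<longrightarrow> dist (G x) (G t) < e / 2"
      using cG unfolding continuous_at_eps_delta by (meson half_gt_zero)
    define d' where "d' = min d del"
    have "d' > 0" using d del by (simp add: d'_def)
    moreover have "dist (sig x) (sig t) < e" if x: "dist x t < d'" for x
    proof -
      have dd: "dist (G x) (G t) < e / 2" using d x by (simp add: d'_def)
      show ?thesis
      proof (cases "x \<le> t")
        case True
        have "t - x \<le> del" using x True by (simp add: d'_def dist_real_def)
        then have l: "len x t \<le> 2 * dist (G x) (G t)" using len_small[of x t] True by simp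
        have "dist (sig x) (sig t) = len x t" using sig_diff[OF True] sig_le[OF True] by (simp add: dist_real_def)
        then show ?thesis using l dd by linarith
      next
        case False
        have "x - t \<le> del" using x False by (simp add: d'_def dist_real_def)
        then have l: "len t x \<le> 2 * dist (G t) (G x)" using len_small[of t x] False by simp
        have tx: "t \<le> x" using False by simp
        have "dist (sig x) (sig t) = len t x" using sig_diff[OF tx] sig_le[OF tx] by (simp add: dist_real_def)
        then show ?thesis using l dd by (simp add: dist_commute)
      qed
    qed
    ultimately show "\<exists>d>0. \<forall>x. dist x t < d \<longrightarrow> dist (sig x) (sig t) < e" by blast
  qed
qed

lemma sig_nat: "sig (real n) = real n * Lam" "sig (- real n) = - real n * Lam"
proof -
  show "sig (real n) = real n * Lam"
  proof (induction n)
    case 0 then show ?case by (simp add: sig_0)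
  next
    case (Suc n)
    then show ?case using sig_period[of "real n"] by (simp add: algebra_simps)
  qed
  show "sig (- real n) = - real n * Lam"
  proof (induction n)
    case 0 then show ?case by (simp add: sig_0)
  next
    case (Suc n)
    have "sig (- real (Suc n) + 1) = sig (- real (Suc n)) + Lam" by (rule sig_period)
    then show ?case using Suc by (simp add: algebra_simps)
  qed
qed

lemma sig_surj: "\<exists>t. sig t = y"
proof -
  obtain N :: nat where N: "\<bar>y\<bar> / Lam \<le> real N" by (meson real_arch_simple)
  then have "\<bar>y\<bar> \<le> real N * Lam" using Lam_pos by (simp add: divide_le_eq)
  then have "sig (- real N) \<le> y" "y \<le> sig (real N)" using sig_nat[of N] by (auto simp: abs_le_iff)
  then show ?thesis using IVT[of sig "- real N" y "real N"] sig_cont by auto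
qed

definition phi :: "real \<Rightarrow> real" where "phi y = (SOME t. sig t = y)"

lemma sig_phi: "sig (phi y) = y"
  unfolding phi_def using sig_surj by (rule someI_ex)

lemma phi_sig: "phi (sig t) = t"
  using sig_phi[of "sig t"] sig_inj by blast

lemma phi_less_iff: "phi a < phi b \<longleftrightarrow> a < b"
  using sig_less_iff[of "phi a" "phi b"] by (simp add: sig_phi)

lemma phi_le_iff: "phi a \<le> phi b \<longleftrightarrow> a \<le> b"
  using sig_le_iff[of "phi a" "phi b"] by (simp add: sig_phi)

lemma phi_period: "phi (y + Lam) = phi y + 1"
proof -
  have "sig (phi y + 1) = y + Lam" using sig_period[of "phi y"] by (simp add: sig_phi)
  then show ?thesis using phi_sig by metis
qed

lemma phi_0: "phi 0 = 0" using phi_sig[of 0] by (simp add: sig_0)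
lemma phi_Lam: "phi Lam = 1" using phi_sig[of 1] by (simp add: sig_1)

definition gam :: "real \<Rightarrow> real^3" where "gam s = G (phi (Lam * s))"

lemma len_gam: "s \<le> s' \<Longrightarrow> len (phi (Lam * s)) (phi (Lam * s')) = Lam * (s' - s)"
proof -
  assume "s \<le> s'"
  then have "phi (Lam * s) \<le> phi (Lam * s')" using Lam_pos by (simp add: phi_le_iff)
  from sig_diff[OF this] show ?thesis by (simp add: sig_phi algebra_simps)
qed

lemma gam_lip: "dist (gam s) (gam s') \<le> Lam * \<bar>s' - s\<bar>"
proof (cases "s \<le> s'")
  case True
  have "phi (Lam * s) \<le> phi (Lam * s')" using True Lam_pos by (simp add: phi_le_iff)
  then have "dist (gam s) (gam s') \<le> len (phi (Lam * s)) (phi (Lam * s'))" unfolding gam_def by (rule len_ge)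
  then show ?thesis using len_gam[OF True] True by simp
next
  case False
  have "phi (Lam * s') \<le> phi (Lam * s)" using False Lam_pos by (simp add: phi_le_iff)
  then have "dist (gam s') (gam s) \<le> len (phi (Lam * s')) (phi (Lam * s))" unfolding gam_def by (rule len_ge)
  then show ?thesis using len_gam[of s' s] False by (simp add: dist_commute)
qed

definition hd0 :: real where "hd0 = min (1/2) (\<tau> / (3 * Lam))"

lemma hd0_pos: "hd0 > 0" using tau Lam_pos by (simp add: hd0_def)

lemma gam_local:
  assumes ss: "s < s'" "s' - s \<le> hd0"
  shows "(1 - (3 * Lam * (s' - s) / (2 * \<tau>))^2) * (Lam * (s' - s)) \<le> dist (gam s) (gam s')"
    and "\<And>s1 s2. s \<le> s1 \<Longrightarrow> s1 \<le> s2 \<Longrightarrow> s2 \<le> s' \<Longrightarrow>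
        (1 - (3 * Lam * (s' - s) / (2 * \<tau>))^2) * norm (gam s2 - gam s1) \<le> (gam s2 - gam s1) \<bullet> secant (gam s') (gam s)"
proof -
  define a where "a = phi (Lam * s)"
  define b where "b = phi (Lam * s')"
  define \<rho> where "\<rho> = Lam * (s' - s)"
  define \<kappa> where "\<kappa> = 3 * \<rho> / (2 * \<tau>)"
  have ab: "a < b" using ss Lam_pos by (simp add: a_def b_def phi_less_iff)
  have lab: "len a b = \<rho>" using len_gam[of s s'] ss by (simp add: a_def b_def \<rho>_def)
  have rho_le: "\<rho> \<le> Lam / 2" using ss Lam_pos by (simp add: \<rho>_def hd0_def)
  have b1: "b - a < 1"
  proof (rule ccontr)
    assume "\<not> b - a < 1"
    then have "len a b = len a (a + 1) + len (a + 1) b" by (intro len_add) auto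
    moreover have "0 \<le> len (a + 1) b" using \<open>\<not> b - a < 1\<close> by (intro len_nonneg) auto
    ultimately have "Lam \<le> \<rho>" using lab len_period[of a] by simp
    then show False using rho_le Lam_pos by simp
  qed
  have rho: "\<forall>t\<in>{a..b}. dist (G t) (G a) \<le> \<rho>"
  proof
    fix t assume t: "t \<in> {a..b}"
    have "dist (G t) (G a) \<le> len a t" using len_ge[of a t] t by (simp add: dist_commute)
    also have "\<dots> \<le> len a b" using len_add[of a t b] len_nonneg[of t b] t by simp
    finally show "dist (G t) (G a) \<le> \<rho>" using lab by simp
  qed
  have kap0: "0 \<le> \<kappa>" using ss Lam_pos tau by (simp add: \<kappa>_def \<rho>_def)
  have kap: "3 * \<rho> / (2 * \<tau>) \<le> 1 / 2"
  proof -
    have "s' - s \<le> \<tau> / (3 * Lam)" using ss(2) by (simp add: hd0_def)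
    then have "\<rho> \<le> Lam * (\<tau> / (3 * Lam))" using Lam_pos unfolding \<rho>_def by (intro mult_left_mono) auto
    also have "\<dots> = \<tau> / 3" using Lam_pos by simp
    finally show ?thesis using tau by (simp add: divide_le_eq)
  qed
  have k_ge: "1 - \<kappa>^2 \<le> sqrt (1 - \<kappa>^2)"
  proof -
    have "\<kappa>^2 \<le> 1" using kap kap0 unfolding \<kappa>_def by (simp add: power_le_one)
    then have x0: "0 \<le> 1 - \<kappa>^2" "1 - \<kappa>^2 \<le> 1" by simp_all
    have "(1 - \<kappa>^2) * (1 - \<kappa>^2) \<le> (1 - \<kappa>^2) * 1" by (rule mult_left_mono) (use x0 in auto)
    then have "(1 - \<kappa>^2)^2 \<le> 1 - \<kappa>^2" by (simp add: power2_eq_square)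
    then show ?thesis by (rule real_le_rsqrt)
  qed
  have "sqrt (1 - \<kappa>^2) * len a b \<le> dist (G a) (G b)"
    unfolding \<kappa>_def by (rule len_local[OF ab b1 rho kap])
  then have "(1 - \<kappa>^2) * \<rho> \<le> dist (G a) (G b)"
    using k_ge lab rho_le Lam_pos ss by (smt (verit) \<rho>_def mult_right_mono zero_less_mult_iff)
  then show "(1 - (3 * Lam * (s' - s) / (2 * \<tau>))^2) * (Lam * (s' - s)) \<le> dist (gam s) (gam s')"
    by (simp add: \<kappa>_def \<rho>_def gam_def a_def b_def mult.assoc)
  fix s1 s2 assume s12: "s \<le> s1" "s1 \<le> s2" "s2 \<le> s'"
  define t1 where "t1 = phi (Lam * s1)"
  define t2 where "t2 = phi (Lam * s2)"
  have tt: "a \<le> t1" "t1 \<le> t2" "t2 \<le> b" using s12 Lam_pos by (simp_all add: a_def b_def t1_def t2_def phi_le_iff)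
  have "sqrt (1 - \<kappa>^2) * norm (G t2 - G t1) \<le> (G t2 - G t1) \<bullet> secant (G b) (G a)"
    unfolding \<kappa>_def by (rule local_mono[OF ab b1 rho kap tt])
  then have "(1 - \<kappa>^2) * norm (G t2 - G t1) \<le> (G t2 - G t1) \<bullet> secant (G b) (G a)"
    using k_ge by (smt (verit) mult_right_mono norm_ge_zero)
  then show "(1 - (3 * Lam * (s' - s) / (2 * \<tau>))^2) * norm (gam s2 - gam s1) \<le> (gam s2 - gam s1) \<bullet> secant (gam s') (gam s)"
    by (simp add: \<kappa>_def \<rho>_def gam_def a_def b_def t1_def t2_def mult.assoc)
qed

end

lemma near_alg:
  fixes w E :: "real^3"
  assumes E: "norm E = 1" and k: "0 \<le> \<kappa>" "\<kappa> \<le> 1" and L: "L > 0"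
    and n1: "(1 - \<kappa>^2) * L \<le> norm w" and n2: "norm w \<le> L" and d: "(1 - \<kappa>^2) * norm w \<le> w \<bullet> E"
  shows "norm (w - L *\<^sub>R E) \<le> 2 * L * \<kappa>"
proof -
  define n where "n = norm w"
  have EE: "E \<bullet> E = 1" using E by (simp add: norm_eq_1)
  have "(norm (w - L *\<^sub>R E))^2 = (w - L *\<^sub>R E) \<bullet> (w - L *\<^sub>R E)" by (simp add: power2_norm_eq_inner)
  also have "\<dots> = w \<bullet> w - 2 * L * (w \<bullet> E) + L^2"
    using EE by (simp add: inner_diff_left inner_diff_right inner_commute[of E w] power2_eq_square algebra_simps)
  also have "\<dots> = n^2 - 2 * L * (w \<bullet> E) + L^2" by (simp add: n_def power2_norm_eq_inner)
  also have "\<dots> \<le> n^2 - 2 * L * ((1 - \<kappa>^2) * n) + L^2"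
  proof -
    have "2 * L * ((1 - \<kappa>^2) * n) \<le> 2 * L * (w \<bullet> E)" by (rule mult_left_mono[OF d[folded n_def]]) (use L in simp)
    then show ?thesis by linarith
  qed
  also have "\<dots> = (L - n)^2 + 2 * L * n * \<kappa>^2" by (simp add: power2_eq_square algebra_simps)
  also have "\<dots> \<le> (\<kappa>^2 * L)^2 + 2 * L * L * \<kappa>^2"
  proof (rule add_mono)
    have h1: "0 \<le> L - n" and h2: "L - n \<le> \<kappa>^2 * L" using n1 n2 by (auto simp: n_def algebra_simps)
    show "(L - n)^2 \<le> (\<kappa>^2 * L)^2" by (rule power_mono[OF h2 h1])
    have "n \<le> L" using n2 by (simp add: n_def)
    then have h3: "(2 * L) * n \<le> (2 * L) * L" using L by (simp add: mult_left_mono)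
    show "2 * L * n * \<kappa>^2 \<le> 2 * L * L * \<kappa>^2" by (rule mult_right_mono[OF h3]) simp
  qed
  also have "\<dots> \<le> (2 * L * \<kappa>)^2"
  proof -
    have "\<kappa>^2 \<le> 1" using k by (simp add: power_le_one)
    then have "\<kappa>^2 * \<kappa>^2 \<le> 1 * \<kappa>^2" by (rule mult_right_mono) simp
    then have "(\<kappa>^2 * \<kappa>^2) * L^2 \<le> (1 * \<kappa>^2) * L^2" by (rule mult_right_mono) simp
    moreover have "(\<kappa>^2 * L)^2 = (\<kappa>^2 * \<kappa>^2) * L^2" by (simp add: power_mult_distrib power2_eq_square)
    ultimately have a: "(\<kappa>^2 * L)^2 \<le> \<kappa>^2 * L^2" by simp
    have b: "(2 * L * \<kappa>)^2 = 4 * (\<kappa>^2 * L^2)" by (simp add: power_mult_distrib)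
    have c: "2 * L * L * \<kappa>^2 = 2 * (\<kappa>^2 * L^2)" by (simp add: power2_eq_square)
    have d: "0 \<le> \<kappa>^2 * L^2" by simp
    show ?thesis unfolding b c using a d by linarith
  qed
  finally have fin: "(norm (w - L *\<^sub>R E))^2 \<le> (2 * L * \<kappa>)^2" .
  show ?thesis by (rule power2_le_imp_le[OF fin]) (use L k in simp)
qed

lemma le_eps:
  fixes x C c :: real
  assumes c: "c > 0" and h: "\<And>h. 0 < h \<Longrightarrow> h \<le> c \<Longrightarrow> x \<le> C * h"
  shows "x \<le> 0"
proof (rule ccontr)
  assume x: "\<not> x \<le> 0"
  define h where "h = min c (x / (2 * (\<bar>C\<bar> + 1)))"
  have hp: "0 < h" "h \<le> c" using c x by (auto simp: h_def)
  have "C * h \<le> \<bar>C\<bar> * h" using hp by (simp add: mult_right_mono)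
  also have "\<dots> \<le> \<bar>C\<bar> * (x / (2 * (\<bar>C\<bar> + 1)))" by (rule mult_left_mono) (auto simp: h_def)
  also have "\<dots> < x"
  proof -
    have D: "2 * (\<bar>C\<bar> + 1) > 0" by simp
    have e: "x * (2 * (\<bar>C\<bar> + 1)) = 2 * (\<bar>C\<bar> * x) + 2 * x" by (simp add: algebra_simps)
    have "0 \<le> \<bar>C\<bar> * x" using x by simp
    then have "\<bar>C\<bar> * x < x * (2 * (\<bar>C\<bar> + 1))" using e x by linarith
    then have "(\<bar>C\<bar> * x) / (2 * (\<bar>C\<bar> + 1)) < x" using D by (simp add: pos_divide_less_eq)
    then show ?thesis by simp
  qed
  finally show False using h[OF hp] by simp
qed

context thick_loop
begin

definition M0 :: real where "M0 = 3 * Lam^2 / \<tau>"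
definition c0 :: real where "c0 = hd0 / 2"

lemma c0_pos: "c0 > 0" using hd0_pos by (simp add: c0_def)
lemma M0_pos: "M0 > 0" using Lam_pos tau by (simp add: M0_def)

lemma near_lt:
  assumes pq: "p < q" "q - p \<le> hd0" and st: "p \<le> s" "s < t" "t \<le> q"
  shows "norm ((gam t - gam s) /\<^sub>R (t - s) - Lam *\<^sub>R secant (gam q) (gam p)) \<le> M0 * (q - p)"
proof -
  define \<kappa> where "\<kappa> = 3 * Lam * (q - p) / (2 * \<tau>)"
  define \<kappa>' where "\<kappa>' = 3 * Lam * (t - s) / (2 * \<tau>)"
  define v where "v = gam t - gam s"
  define h where "h = t - s"
  define E where "E = secant (gam q) (gam p)"
  have hpos: "h > 0" using st by (simp add: h_def)
  have kap0: "0 \<le> \<kappa>" using pq Lam_pos tau by (simp add: \<kappa>_def)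
  have kap1: "\<kappa> \<le> 1"
  proof -
    have "q - p \<le> \<tau> / (3 * Lam)" using pq(2) by (simp add: hd0_def)
    then have "Lam * (q - p) \<le> Lam * (\<tau> / (3 * Lam))" by (rule mult_left_mono) (use Lam_pos in simp)
    then have "Lam * (q - p) \<le> \<tau> / 3" using Lam_pos by simp
    then show ?thesis using tau by (simp add: \<kappa>_def divide_le_eq)
  qed
  have kk: "\<kappa>'^2 \<le> \<kappa>^2"
  proof -
    have "0 \<le> \<kappa>'" "\<kappa>' \<le> \<kappa>" using st pq Lam_pos tau by (auto simp: \<kappa>_def \<kappa>'_def divide_right_mono)
    then show ?thesis by (simp add: power_mono)
  qed
  have l1: "(1 - \<kappa>'^2) * (Lam * h) \<le> norm v"
    using gam_local(1)[of s t] st pq by (simp add: \<kappa>'_def h_def v_def dist_norm norm_minus_commute)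
  have l1': "(1 - \<kappa>^2) * (Lam * h) \<le> norm v"
  proof -
    have "(1 - \<kappa>^2) * (Lam * h) \<le> (1 - \<kappa>'^2) * (Lam * h)" using kk hpos Lam_pos by (simp add: mult_right_mono)
    then show ?thesis using l1 by simp
  qed
  have l2: "(1 - \<kappa>^2) * norm v \<le> v \<bullet> E"
    using gam_local(2)[OF pq, of s t] st by (simp add: \<kappa>_def v_def E_def)
  have l3: "norm v \<le> Lam * h" using gam_lip[of s t] st by (simp add: v_def h_def dist_norm norm_minus_commute)
  have gpq: "gam q \<noteq> gam p"
  proof -
    have "(1 - \<kappa>^2) * (Lam * (q - p)) \<le> dist (gam p) (gam q)" using gam_local(1)[OF pq] by (simp add: \<kappa>_def)
    moreover have "\<kappa>^2 \<le> 1" using kap0 kap1 by (simp add: power_le_one)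
    moreover have "(1 - \<kappa>^2) * (Lam * (q - p)) > 0 \<or> \<kappa>^2 = 1" using pq Lam_pos \<open>\<kappa>^2 \<le> 1\<close> by auto
    ultimately show ?thesis
    proof -
      have "\<kappa> \<le> 1/2"
      proof -
        have "q - p \<le> \<tau> / (3 * Lam)" using pq(2) by (simp add: hd0_def)
        then have "Lam * (q - p) \<le> Lam * (\<tau> / (3 * Lam))" by (rule mult_left_mono) (use Lam_pos in simp)
        then have "Lam * (q - p) \<le> \<tau> / 3" using Lam_pos by simp
        then show ?thesis using tau by (simp add: \<kappa>_def divide_le_eq)
      qed
      then have "\<kappa>^2 \<le> (1/2)^2" using kap0 by (simp add: power_mono)
      then have "0 < 1 - \<kappa>^2" by (simp add: power2_eq_square)
      then have "0 < (1 - \<kappa>^2) * (Lam * (q - p))" using pq Lam_pos by simp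
      then show ?thesis using \<open>(1 - \<kappa>^2) * (Lam * (q - p)) \<le> dist (gam p) (gam q)\<close> by auto
    qed
  qed
  have E1: "norm E = 1" unfolding E_def using gpq by (rule norm_secant)
  define w where "w = v /\<^sub>R h"
  have nw: "norm w = norm v / h" using hpos by (simp add: w_def divide_inverse mult.commute)
  have wE: "w \<bullet> E = (v \<bullet> E) / h" by (simp add: w_def divide_inverse mult.commute)
  have "norm (w - Lam *\<^sub>R E) \<le> 2 * Lam * \<kappa>"
  proof (rule near_alg[OF E1 kap0 kap1 Lam_pos])
    show "(1 - \<kappa>^2) * Lam \<le> norm w" using l1' hpos by (simp add: nw le_divide_eq mult.assoc)
    show "norm w \<le> Lam" using l3 hpos by (simp add: nw divide_le_eq mult.commute)
    have "(1 - \<kappa>^2) * norm v / h \<le> (v \<bullet> E) / h" using l2 hpos by (simp add: divide_right_mono)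
    then show "(1 - \<kappa>^2) * norm w \<le> w \<bullet> E" by (simp add: nw wE)
  qed
  also have "2 * Lam * \<kappa> = M0 * (q - p)" using tau by (simp add: \<kappa>_def M0_def power2_eq_square)
  finally show ?thesis by (simp add: w_def v_def h_def E_def)
qed

lemma near:
  assumes pq: "p < q" "q - p \<le> hd0" and st: "s \<in> {p..q}" "t \<in> {p..q}" "s \<noteq> t"
  shows "norm ((gam t - gam s) /\<^sub>R (t - s) - Lam *\<^sub>R secant (gam q) (gam p)) \<le> M0 * (q - p)"
proof (cases "s < t")
  case True then show ?thesis using near_lt[OF pq] st by auto
next
  case False
  then have "t < s" using st by simp
  then have "norm ((gam s - gam t) /\<^sub>R (s - t) - Lam *\<^sub>R secant (gam q) (gam p)) \<le> M0 * (q - p)"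
    using near_lt[OF pq] st by auto
  moreover have "(gam s - gam t) /\<^sub>R (s - t) = (gam t - gam s) /\<^sub>R (t - s)"
  proof -
    have "(gam s - gam t) /\<^sub>R (s - t) = (- (gam t - gam s)) /\<^sub>R (- (t - s))" by simp
    also have "\<dots> = (gam t - gam s) /\<^sub>R (t - s)" by (simp only: inverse_minus_eq scaleR_minus_left scaleR_minus_right minus_minus)
    finally show ?thesis .
  qed
  ultimately show ?thesis by simp
qed

definition Q :: "real \<Rightarrow> real \<Rightarrow> real^3" where "Q s h = (gam (s + h) - gam s) /\<^sub>R h"

lemma Q_near:
  assumes pq: "p < q" "q - p \<le> hd0" and st: "s \<in> {p..q}" "s + h \<in> {p..q}" "h \<noteq> 0"
  shows "norm (Q s h - Lam *\<^sub>R secant (gam q) (gam p)) \<le> M0 * (q - p)"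
  using near[OF pq st(1,2)] st(3) by (simp add: Q_def)

lemma Q_cauchy:
  assumes h1: "h1 \<noteq> 0" "\<bar>h1\<bar> \<le> c0" and h2: "h2 \<noteq> 0" "\<bar>h2\<bar> \<le> c0"
  shows "norm (Q s h1 - Q s h2) \<le> 2 * M0 * (\<bar>h1\<bar> + \<bar>h2\<bar>)"
proof -
  define p where "p = min s (min (s + h1) (s + h2))"
  define q where "q = max s (max (s + h1) (s + h2))"
  have pq: "p < q" using h1 unfolding p_def q_def by linarith
  have pqw: "q - p \<le> \<bar>h1\<bar> + \<bar>h2\<bar>" unfolding p_def q_def by linarith
  have pq2: "q - p \<le> hd0" using pqw h1 h2 by (simp add: c0_def)
  have i: "s \<in> {p..q}" "s + h1 \<in> {p..q}" "s + h2 \<in> {p..q}" unfolding p_def q_def atLeastAtMost_iff by linarith+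
  have a1: "norm (Q s h1 - Lam *\<^sub>R secant (gam q) (gam p)) \<le> M0 * (q - p)" by (rule Q_near[OF pq pq2 i(1,2) h1(1)])
  have a2: "norm (Q s h2 - Lam *\<^sub>R secant (gam q) (gam p)) \<le> M0 * (q - p)" by (rule Q_near[OF pq pq2 i(1,3) h2(1)])
  have "norm (Q s h1 - Q s h2) \<le> norm (Q s h1 - Lam *\<^sub>R secant (gam q) (gam p)) + norm (Q s h2 - Lam *\<^sub>R secant (gam q) (gam p))"
    by (rule norm_diff_triangle_le[OF order_refl]) (simp add: norm_minus_commute)
  also have "\<dots> \<le> 2 * M0 * (q - p)" using a1 a2 by simp
  also have "\<dots> \<le> 2 * M0 * (\<bar>h1\<bar> + \<bar>h2\<bar>)" using pqw M0_pos by simp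
  finally show ?thesis .
qed

end

context thick_loop
begin

definition X :: "real \<Rightarrow> nat \<Rightarrow> real^3" where "X s n = Q s (c0 / real (Suc n))"

lemma cn: "c0 / real (Suc n) \<noteq> 0" "\<bar>c0 / real (Suc n)\<bar> \<le> c0" "c0 / real (Suc n) > 0"
proof -
  have "c0 / real (Suc n) \<le> c0 / 1" using c0_pos by (intro divide_left_mono) auto
  then show "\<bar>c0 / real (Suc n)\<bar> \<le> c0" using c0_pos by simp
  show "c0 / real (Suc n) \<noteq> 0" "c0 / real (Suc n) > 0" using c0_pos by auto
qed

lemma X_bound: "norm (X s m - X s n) \<le> 2 * M0 * (c0 / real (Suc m) + c0 / real (Suc n))"
  using Q_cauchy[of "c0 / real (Suc m)" "c0 / real (Suc n)" s, OF cn(1,2) cn(1,2)] cn(3)[of m] cn(3)[of n] c0_pos by (simp add: X_def)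

lemma X_cauchy: "Cauchy (X s)"
proof (rule CauchyI)
  fix e :: real assume e: "0 < e"
  obtain M :: nat where M: "4 * M0 * c0 / e < real M" using reals_Archimedean2 by blast
  have Mp: "0 < real (Suc M)" by simp
  have key: "4 * M0 * c0 / real (Suc M) < e"
  proof -
    have "4 * M0 * c0 < e * real M" using M e by (simp add: divide_less_eq mult.commute)
    also have "\<dots> \<le> e * real (Suc M)" using e by simp
    finally show ?thesis using Mp by (simp add: divide_less_eq mult.commute)
  qed
  have "\<forall>m\<ge>M. \<forall>n\<ge>M. norm (X s m - X s n) < e"
  proof (intro allI impI)
    fix m n assume mn: "M \<le> m" "M \<le> n"
    have a: "c0 / real (Suc m) \<le> c0 / real (Suc M)" using mn c0_pos by (intro divide_left_mono) auto
    have b: "c0 / real (Suc n) \<le> c0 / real (Suc M)" using mn c0_pos by (intro divide_left_mono) auto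
    have "norm (X s m - X s n) \<le> 2 * M0 * (c0 / real (Suc m) + c0 / real (Suc n))" by (rule X_bound)
    also have "\<dots> \<le> 2 * M0 * (c0 / real (Suc M) + c0 / real (Suc M))"
    proof -
      have "c0 / real (Suc m) + c0 / real (Suc n) \<le> c0 / real (Suc M) + c0 / real (Suc M)" using a b by linarith
      then show ?thesis by (rule mult_left_mono) (use M0_pos in simp)
    qed
    also have "\<dots> = 4 * M0 * c0 / real (Suc M)" by (simp add: divide_inverse algebra_simps)
    finally show "norm (X s m - X s n) < e" using key by simp
  qed
  then show "\<exists>M. \<forall>m\<ge>M. \<forall>n\<ge>M. norm (X s m - X s n) < e" by blast
qed

definition V :: "real \<Rightarrow> real^3" where "V s = lim (X s)"

lemma X_lim: "X s \<longlonglongrightarrow> V s"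
  unfolding V_def using X_cauchy Cauchy_convergent convergent_LIMSEQ_iff by blast

end
context thick_loop
begin
lemma Q_V:
  assumes h: "h \<noteq> 0" "\<bar>h\<bar> \<le> c0"
  shows "norm (Q s h - V s) \<le> 2 * M0 * \<bar>h\<bar>"
proof -
  have l1: "(\<lambda>n. norm (Q s h - X s n)) \<longlonglongrightarrow> norm (Q s h - V s)"
    by (intro tendsto_intros X_lim)
  have c: "(\<lambda>n. c0 / real (Suc n)) \<longlonglongrightarrow> 0"
    using LIMSEQ_Suc[OF lim_const_over_n[of c0]] by simp
  have l2: "(\<lambda>n. 2 * M0 * (\<bar>h\<bar> + c0 / real (Suc n))) \<longlonglongrightarrow> 2 * M0 * (\<bar>h\<bar> + 0)"
    by (intro tendsto_intros c)
  have "\<forall>n. norm (Q s h - X s n) \<le> 2 * M0 * (\<bar>h\<bar> + c0 / real (Suc n))"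
  proof
    fix n
    show "norm (Q s h - X s n) \<le> 2 * M0 * (\<bar>h\<bar> + c0 / real (Suc n))"
      using Q_cauchy[of h "c0 / real (Suc n)" s, OF h cn(1,2)] cn(3)[of n] c0_pos by (simp add: X_def)
  qed
  then have "norm (Q s h - V s) \<le> 2 * M0 * (\<bar>h\<bar> + 0)"
    by (intro LIMSEQ_le[OF l1 l2]) auto
  then show ?thesis by simp
qed

lemma gam_deriv: "(gam has_vector_derivative V s) (at s)"
  unfolding has_vector_derivative_def has_derivative_at_alt
proof (intro conjI allI impI)
  show "bounded_linear (\<lambda>x. x *\<^sub>R V s)" by (rule bounded_linear_scaleR_left)
  fix e :: real assume e: "e > 0"
  define d where "d = min c0 (e / (2 * M0))"
  have dpos: "d > 0" using c0_pos M0_pos e by (simp add: d_def)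
  have "norm (gam y - gam s - (y - s) *\<^sub>R V s) \<le> e * norm (y - s)" if y: "norm (y - s) < d" for y
  proof (cases "y = s")
    case True then show ?thesis by simp
  next
    case False
    define h where "h = y - s"
    have h0: "h \<noteq> 0" using False by (simp add: h_def)
    have hc: "\<bar>h\<bar> \<le> c0" using y by (simp add: h_def d_def)
    have he: "2 * M0 * \<bar>h\<bar> \<le> e"
    proof -
      have "\<bar>h\<bar> \<le> e / (2 * M0)" using y by (simp add: h_def d_def)
      then show ?thesis using M0_pos by (simp add: le_divide_eq mult.commute)
    qed
    have "gam y - gam s - (y - s) *\<^sub>R V s = h *\<^sub>R (Q s h - V s)"
      using h0 by (simp add: Q_def h_def scaleR_diff_right)
    then have "norm (gam y - gam s - (y - s) *\<^sub>R V s) = \<bar>h\<bar> * norm (Q s h - V s)" by simp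
    also have "\<dots> \<le> \<bar>h\<bar> * (2 * M0 * \<bar>h\<bar>)" by (rule mult_left_mono[OF Q_V[OF h0 hc]]) simp
    also have "\<dots> \<le> \<bar>h\<bar> * e" by (rule mult_left_mono[OF he]) simp
    finally show ?thesis by (simp add: h_def mult.commute)
  qed
  then show "\<exists>d>0. \<forall>y. norm (y - s) < d \<longrightarrow> norm (gam y - gam s - (y - s) *\<^sub>R V s) \<le> e * norm (y - s)"
    using dpos by blast
qed

end
context thick_loop
begin
lemma V_norm: "norm (V s) = Lam"
proof -
  define C where "C = 2 * M0 + (3 * Lam / (2 * \<tau>))^2 * c0 * Lam"
  have "\<bar>norm (V s) - Lam\<bar> \<le> 0"
  proof (rule le_eps[OF c0_pos])
    fix h :: real assume h: "0 < h" "h \<le> c0"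
    have hh: "h \<le> hd0" using h hd0_pos by (simp add: c0_def)
    have nQ: "norm (Q s h) = norm (gam (s + h) - gam s) / h" using h by (simp add: Q_def divide_inverse mult.commute)
    have q1: "norm (Q s h) \<le> Lam"
    proof -
      have "norm (gam (s + h) - gam s) \<le> Lam * h" using gam_lip[of s "s + h"] h by (simp add: dist_norm norm_minus_commute)
      then have "norm (gam (s + h) - gam s) / h \<le> Lam" using h by (simp add: pos_divide_le_eq mult.commute)
      then show ?thesis using nQ by simp
    qed
    have q2: "Lam - (3 * Lam * h / (2 * \<tau>))^2 * Lam \<le> norm (Q s h)"
    proof -
      have "(1 - (3 * Lam * h / (2 * \<tau>))^2) * (Lam * h) \<le> norm (gam (s + h) - gam s)"
        using gam_local(1)[of s "s + h"] h hh by (simp add: dist_norm norm_minus_commute)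
      then have "(1 - (3 * Lam * h / (2 * \<tau>))^2) * (Lam * h) / h \<le> norm (gam (s + h) - gam s) / h"
        by (rule divide_right_mono) (use h in simp)
      moreover have "(1 - (3 * Lam * h / (2 * \<tau>))^2) * (Lam * h) / h = Lam - (3 * Lam * h / (2 * \<tau>))^2 * Lam"
      proof -
        define A where "A = 1 - (3 * Lam * h / (2 * \<tau>))^2"
        have "A * (Lam * h) / h = A * Lam" using h by simp
        moreover have "A * Lam = Lam - (3 * Lam * h / (2 * \<tau>))^2 * Lam" by (simp add: A_def algebra_simps)
        ultimately show ?thesis by (simp add: A_def)
      qed
      ultimately show ?thesis using nQ by simp
    qed
    have qv: "norm (Q s h - V s) \<le> 2 * M0 * h" using Q_V[of h s] h by simp
    have sq: "(3 * Lam * h / (2 * \<tau>))^2 * Lam \<le> (3 * Lam / (2 * \<tau>))^2 * c0 * Lam * h"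
    proof -
      have e1: "(3 * Lam * h / (2 * \<tau>))^2 * Lam = ((3 * Lam / (2 * \<tau>))^2 * Lam * h) * h" by (simp add: power2_eq_square)
      have e2: "(3 * Lam / (2 * \<tau>))^2 * c0 * Lam * h = ((3 * Lam / (2 * \<tau>))^2 * Lam * h) * c0" by (simp add: algebra_simps)
      have "0 \<le> (3 * Lam / (2 * \<tau>))^2 * Lam * h" using h Lam_pos by simp
      then have "((3 * Lam / (2 * \<tau>))^2 * Lam * h) * h \<le> ((3 * Lam / (2 * \<tau>))^2 * Lam * h) * c0"
        by (rule mult_left_mono[OF h(2)])
      then show ?thesis unfolding e1 e2 .
    qed
    have t1: "\<bar>norm (V s) - norm (Q s h)\<bar> \<le> norm (Q s h - V s)"
      using norm_triangle_ineq3[of "V s" "Q s h"] by (simp add: norm_minus_commute)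
    have "\<bar>norm (V s) - Lam\<bar> \<le> 2 * M0 * h + (3 * Lam * h / (2 * \<tau>))^2 * Lam"
      using t1 qv q1 q2 by linarith
    also have "\<dots> \<le> C * h" using sq by (simp add: C_def distrib_right)
    finally show "\<bar>norm (V s) - Lam\<bar> \<le> C * h" .
  qed
  then show ?thesis by simp
qed

end
context thick_loop
begin
definition KK :: real where "KK = 2 * M0 + 2 * Lam / c0"

lemma V_lip_lt:
  assumes st: "s < t"
  shows "norm (V s - V t) \<le> KK * (t - s)"
proof (cases "t - s \<le> c0")
  case True
  have "norm (V s - V t) - 2 * M0 * (t - s) \<le> 0"
  proof (rule le_eps[OF c0_pos])
    fix h :: real assume h: "0 < h" "h \<le> c0"
    define p where "p = s"
    define q where "q = t + h"
    have pq: "p < q" "q - p \<le> hd0" using st h True by (auto simp: p_def q_def c0_def)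
    have a1: "norm (Q s h - Lam *\<^sub>R secant (gam q) (gam p)) \<le> M0 * (q - p)"
      by (rule Q_near[OF pq]) (use st h in \<open>auto simp: p_def q_def\<close>)
    have a2: "norm (Q t h - Lam *\<^sub>R secant (gam q) (gam p)) \<le> M0 * (q - p)"
      by (rule Q_near[OF pq]) (use st h in \<open>auto simp: p_def q_def\<close>)
    have v1: "norm (V s - Q s h) \<le> 2 * M0 * h" using Q_V[of h s] h by (simp add: norm_minus_commute)
    have v2: "norm (Q t h - V t) \<le> 2 * M0 * h" using Q_V[of h t] h by simp
    have "norm (V s - V t) \<le> norm (V s - Q s h) + norm (Q s h - Lam *\<^sub>R secant (gam q) (gam p))
        + norm (Q t h - Lam *\<^sub>R secant (gam q) (gam p)) + norm (Q t h - V t)"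
    proof -
      have "V s - V t = (V s - Q s h) + (Q s h - Lam *\<^sub>R secant (gam q) (gam p))
          - (Q t h - Lam *\<^sub>R secant (gam q) (gam p)) + (Q t h - V t)" by simp
      then have "norm (V s - V t) = norm ((V s - Q s h) + (Q s h - Lam *\<^sub>R secant (gam q) (gam p))
          - (Q t h - Lam *\<^sub>R secant (gam q) (gam p)) + (Q t h - V t))" by (rule arg_cong)
      moreover have "norm ((V s - Q s h) + (Q s h - Lam *\<^sub>R secant (gam q) (gam p))
          - (Q t h - Lam *\<^sub>R secant (gam q) (gam p)) + (Q t h - V t)) \<le> norm ((V s - Q s h) + (Q s h - Lam *\<^sub>R secant (gam q) (gam p))
          - (Q t h - Lam *\<^sub>R secant (gam q) (gam p))) + norm (Q t h - V t)" by (rule norm_triangle_ineq)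
      moreover have "norm ((V s - Q s h) + (Q s h - Lam *\<^sub>R secant (gam q) (gam p))
          - (Q t h - Lam *\<^sub>R secant (gam q) (gam p))) \<le> norm ((V s - Q s h) + (Q s h - Lam *\<^sub>R secant (gam q) (gam p)))
          + norm (Q t h - Lam *\<^sub>R secant (gam q) (gam p))" by (rule norm_triangle_ineq4)
      moreover have "norm ((V s - Q s h) + (Q s h - Lam *\<^sub>R secant (gam q) (gam p))) \<le> norm (V s - Q s h) + norm (Q s h - Lam *\<^sub>R secant (gam q) (gam p))"
        by (rule norm_triangle_ineq)
      ultimately show ?thesis by linarith
    qed
    also have "\<dots> \<le> 2 * M0 * h + M0 * (q - p) + M0 * (q - p) + 2 * M0 * h" using v1 v2 a1 a2 by linarith
    also have "\<dots> = 2 * M0 * (t - s) + 6 * M0 * h" by (simp add: p_def q_def algebra_simps)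
    finally show "norm (V s - V t) - 2 * M0 * (t - s) \<le> 6 * M0 * h" by simp
  qed
  then have "norm (V s - V t) \<le> 2 * M0 * (t - s)" by simp
  also have "\<dots> \<le> KK * (t - s)"
  proof (rule mult_right_mono)
    show "2 * M0 \<le> KK" using Lam_pos c0_pos by (simp add: KK_def)
  qed (use st in simp)
  finally show ?thesis .
next
  case False
  have "norm (V s - V t) \<le> norm (V s) + norm (V t)" by (rule norm_triangle_ineq4)
  also have "\<dots> = 2 * Lam" by (simp add: V_norm)
  also have "\<dots> = (2 * Lam / c0) * c0" using c0_pos by simp
  also have "\<dots> \<le> (2 * Lam / c0) * (t - s)"
    by (rule mult_left_mono) (use False Lam_pos c0_pos in auto)
  also have "\<dots> \<le> KK * (t - s)"
  proof (rule mult_right_mono)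
    show "2 * Lam / c0 \<le> KK" using M0_pos by (simp add: KK_def)
  qed (use st in simp)
  finally show ?thesis .
qed

lemma V_lip: "norm (V s - V t) \<le> KK * \<bar>s - t\<bar>"
proof -
  consider "s < t" | "s = t" | "t < s" by linarith
  then show ?thesis
  proof cases
    case 1 then show ?thesis using V_lip_lt[of s t] by simp
  next
    case 2 then show ?thesis by simp
  next
    case 3 then show ?thesis using V_lip_lt[of t s] by (simp add: norm_minus_commute)
  qed
qed

end

context thick_loop
begin

lemma phi_inj: "phi a = phi b \<Longrightarrow> a = b"
  using phi_le_iff[of a b] phi_le_iff[of b a] by auto

lemma C11_core:
  "\<exists>\<gamma> \<gamma>' lam K. (\<forall>t. \<gamma> (t + 1) = \<gamma> t) \<and> inj_on \<gamma> {0..<1} \<and> \<gamma> ` {0..1} = G ` {0..1} \<and>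
       (\<forall>t. (\<gamma> has_vector_derivative \<gamma>' t) (at t)) \<and>
       lam > 0 \<and> (\<forall>t. norm (\<gamma>' t) = lam) \<and>
       (\<forall>s t. norm (\<gamma>' s - \<gamma>' t) \<le> K * \<bar>s - t\<bar>)"
proof (intro exI conjI allI)
  fix t
  show "gam (t + 1) = gam t"
    unfolding gam_def by (simp add: distrib_left phi_period perG)
next
  show "inj_on gam {0..<1}"
  proof (rule inj_onI)
    fix s t assume st: "s \<in> {0..<1}" "t \<in> {0..<1}" "gam s = gam t"
    have r: "phi (Lam * u) \<in> {0..<1}" if "u \<in> {0..<1}" for u
    proof -
      have "0 \<le> Lam * u" "Lam * u < Lam" using that Lam_pos by auto
      then have "phi 0 \<le> phi (Lam * u)" "phi (Lam * u) < phi Lam" by (simp_all add: phi_le_iff phi_less_iff)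
      then show ?thesis by (simp add: phi_0 phi_Lam)
    qed
    have "\<bar>phi (Lam * s) - phi (Lam * t)\<bar> < 1" using r[OF st(1)] r[OF st(2)] by auto
    then have "phi (Lam * s) = phi (Lam * t)" using injG st(3) unfolding gam_def by blast
    then have "Lam * s = Lam * t" by (rule phi_inj)
    then show "s = t" using Lam_pos by simp
  qed
next
  show "gam ` {0..1} = G ` {0..1}"
  proof (intro equalityI subsetI)
    fix y assume "y \<in> gam ` {0..1}"
    then obtain u where u: "u \<in> {0..1}" "y = gam u" by auto
    have "0 \<le> Lam * u" "Lam * u \<le> Lam" using u Lam_pos by auto
    then have "phi 0 \<le> phi (Lam * u)" "phi (Lam * u) \<le> phi Lam" by (simp_all add: phi_le_iff)
    then have "phi (Lam * u) \<in> {0..1}" by (simp add: phi_0 phi_Lam)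
    then show "y \<in> G ` {0..1}" using u by (auto simp: gam_def)
  next
    fix y assume "y \<in> G ` {0..1}"
    then obtain t where t: "t \<in> {0..1}" "y = G t" by auto
    have "sig 0 \<le> sig t" "sig t \<le> sig 1" using t by (simp_all add: sig_le_iff)
    then have "0 \<le> sig t / Lam" "sig t / Lam \<le> 1" using Lam_pos by (simp_all add: sig_0 sig_1)
    moreover have "gam (sig t / Lam) = G t" using Lam_pos by (simp add: gam_def phi_sig)
    ultimately show "y \<in> gam ` {0..1}" using t by (metis atLeastAtMost_iff image_eqI)
  qed
next
  fix t show "(gam has_vector_derivative V t) (at t)" by (rule gam_deriv)
next
  show "Lam > 0" by (rule Lam_pos)
next
  fix t show "norm (V t) = Lam" by (rule V_norm)
next
  fix s t show "norm (V s - V t) \<le> KK * \<bar>s - t\<bar>" by (rule V_lip)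
qed

end

lemma loop_param:
  fixes g :: "real \<Rightarrow> real^3"
  assumes sp: "simple_path g" and lp: "pathfinish g = pathstart g"
  shows "\<exists>G :: real \<Rightarrow> real^3. continuous_on UNIV G \<and> (\<forall>t. G (t + 1) = G t) \<and>
     (\<forall>s t. \<bar>s - t\<bar> < 1 \<longrightarrow> G s = G t \<longrightarrow> s = t) \<and> G ` {0..1} = path_image g \<and> range G \<subseteq> path_image g"
proof -
  have "path_image g homeomorphic sphere (0::complex) 1"
    by (rule homeomorphic_simple_path_image_circle) (use sp lp in auto)
  then obtain f h where hom: "homeomorphism (path_image g) (sphere (0::complex) 1) f h"
    by (auto simp: homeomorphic_def)
  have hc: "continuous_on (sphere 0 1) h" and him: "h ` sphere 0 1 = path_image g"
    and fh: "\<And>y. y \<in> sphere 0 1 \<Longrightarrow> f (h y) = y"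
    using hom by (auto simp: homeomorphism_def)
  define c where "c t = cis (2 * pi * t)" for t
  have cs: "c t \<in> sphere 0 1" for t by (simp add: c_def)
  define G where "G = h \<circ> c"
  have cont: "continuous_on UNIV G"
    unfolding G_def
  proof (rule continuous_on_compose)
    show "continuous_on UNIV c" unfolding c_def by (intro continuous_intros)
    show "continuous_on (c ` UNIV) h" by (rule continuous_on_subset[OF hc]) (use cs in auto)
  qed
  have per: "G (t + 1) = G t" for t
  proof -
    have "c (t + 1) = cis (2 * pi * t + 2 * pi)" by (simp add: c_def distrib_left)
    also have "\<dots> = cis (2 * pi * t) * cis (2 * pi)" by (rule cis_mult[symmetric])
    also have "\<dots> = c t" by (simp add: c_def)
    finally show ?thesis by (simp add: G_def)
  qed
  have inj: "s = t" if st: "\<bar>s - t\<bar> < 1" "G s = G t" for s t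
  proof -
    have "f (h (c s)) = f (h (c t))" using st(2) by (simp add: G_def)
    then have "c s = c t" using fh[OF cs[of s]] fh[OF cs[of t]] by simp
    then have "exp (\<i> * complex_of_real (2 * pi * s)) = exp (\<i> * complex_of_real (2 * pi * t))"
      by (simp add: c_def cis_conv_exp)
    then obtain n :: int where n: "\<i> * complex_of_real (2 * pi * s) = \<i> * complex_of_real (2 * pi * t) + (of_int (2 * n) * pi) * \<i>"
      using exp_eq by blast
    have "Im (\<i> * complex_of_real (2 * pi * s)) = Im (\<i> * complex_of_real (2 * pi * t) + (of_int (2 * n) * pi) * \<i>)"
      using n by simp
    then have "2 * pi * s = 2 * pi * t + 2 * real_of_int n * pi" by simp
    then have "2 * pi * s = 2 * pi * (t + real_of_int n)" by (simp add: algebra_simps)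
    then have "s = t + real_of_int n" using pi_gt_zero by simp
    then have "\<bar>real_of_int n\<bar> < 1" using st(1) by simp
    then have "n = 0" by linarith
    then show ?thesis using \<open>s = t + real_of_int n\<close> by simp
  qed
  have img: "G ` {0..1} = path_image g"
  proof (intro equalityI subsetI)
    fix y assume "y \<in> G ` {0..1}"
    then show "y \<in> path_image g" using him cs by (auto simp: G_def)
  next
    fix y assume "y \<in> path_image g"
    then have "y \<in> h ` sphere 0 1" using him by simp
    then obtain z where z: "z \<in> sphere 0 1" "y = h z" by (auto simp del: mem_sphere)
    define r where "r = Arg2pi z"
    have r: "0 \<le> r" "r < 2 * pi" "z = of_real (norm z) * exp (\<i> * of_real r)"
      using Arg2pi[of z] by (auto simp: r_def is_Arg_def)
    have nz: "norm z = 1" using z by simp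
    define t where "t = r / (2 * pi)"
    have t: "t \<in> {0..1}" using r by (auto simp: t_def)
    have "c t = exp (\<i> * of_real r)" by (simp add: c_def t_def cis_conv_exp)
    also have "\<dots> = z" using r(3) nz by simp
    finally show "y \<in> G ` {0..1}" using t z by (auto simp: G_def intro!: image_eqI[of _ _ t])
  qed
  have rg: "range G \<subseteq> path_image g" using him cs by (auto simp: G_def)
  have inj': "\<forall>s t. \<bar>s - t\<bar> < 1 \<longrightarrow> G s = G t \<longrightarrow> s = t" using inj by blast
  have per': "\<forall>t. G (t + 1) = G t" using per by blast
  show ?thesis
    apply (rule exI[of _ G])
    using cont per' inj' img rg by blast
qed

lemma component_eq:
  fixes F :: "(real^3) set set"
  assumes fin: "finite F" and cc: "\<And>C. C \<in> F \<Longrightarrow> compact C \<and> connected C"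
    and dj: "pairwise disjnt F" and C: "C \<in> F" and x: "x \<in> C"
  shows "connected_component_set (\<Union>F) x = C"
proof (rule antisym)
  show "C \<subseteq> connected_component_set (\<Union>F) x"
    by (rule connected_component_maximal) (use x cc[OF C] C in auto)
next
  define K where "K = connected_component_set (\<Union>F) x"
  define R where "R = \<Union>(F - {C})"
  have Kc: "connected K" unfolding K_def by (rule connected_connected_component)
  have KL: "K \<subseteq> C \<union> R" unfolding K_def R_def using connected_component_subset by blast
  have Cc: "closed C" using cc[OF C] compact_imp_closed by blast
  have Rc: "closed R" unfolding R_def using fin cc by (intro closed_Union) (auto intro: compact_imp_closed)
  have CR: "C \<inter> R = {}" unfolding R_def using dj C by (auto simp: pairwise_def disjnt_def)
  have xK: "x \<in> K" unfolding K_def using x C by auto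
  have "K \<inter> R = {}"
  proof (rule ccontr)
    assume KR: "K \<inter> R \<noteq> {}"
    have "C \<inter> R \<inter> K = {}" using CR by blast
    moreover have "C \<inter> K \<noteq> {}" using xK x by blast
    moreover have "R \<inter> K \<noteq> {}" using KR by blast
    ultimately have "\<exists>A B. closed A \<and> closed B \<and> K \<subseteq> A \<union> B \<and> A \<inter> B \<inter> K = {} \<and> A \<inter> K \<noteq> {} \<and> B \<inter> K \<noteq> {}"
      using Cc Rc KL by blast
    then show False using Kc unfolding connected_closed by blast
  qed
  then show "K \<subseteq> C" using KL by blast
qed


theorem lemma4:
  fixes L :: "(real^3) set" and \<tau> :: real
  assumes "is_link L" and "thickness L = ereal \<tau>" and "\<tau> > 0"
  shows "(\<forall>x\<in>L. \<forall>y\<in>L. \<forall>x'\<in>L. \<forall>y'\<in>L. x \<noteq> y \<longrightarrow> x' \<noteq> y' \<longrightarrow>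
            ereal (rp2_dist (secant x y) (secant x' y'))
              \<le> ereal (1 / (2 * \<tau>)) * (arc_dist L x x' + arc_dist L y y'))
         \<and> C11_link L"
proof
  show "\<forall>x\<in>L. \<forall>y\<in>L. \<forall>x'\<in>L. \<forall>y'\<in>L. x \<noteq> y \<longrightarrow> x' \<noteq> y' \<longrightarrow>
            ereal (rp2_dist (secant x y) (secant x' y'))
              \<le> ereal (1 / (2 * \<tau>)) * (arc_dist L x x' + arc_dist L y y')"
    by (rule part1[OF assms(2,3)])
next
  obtain F where F: "finite F" "\<forall>C\<in>F. simple_closed_curve C" "pairwise disjnt F" "L = \<Union>F"
    using assms(1) unfolding is_link_def by blast
  have cc: "compact C \<and> connected C" if "C \<in> F" for C
  proof -
    have "simple_closed_curve C" using F(2) that by blast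
    then obtain g where g: "simple_path g" "path_image g = C" unfolding simple_closed_curve_def by auto
    have "path g" using g(1) by (rule simple_path_imp_path)
    then show ?thesis using g(2) compact_path_image[of g] connected_path_image[of g] by simp
  qed
  show "C11_link L"
    unfolding C11_link_def
  proof
    fix x assume x: "x \<in> L"
    obtain C where C: "C \<in> F" "x \<in> C" using x F(4) by blast
    have "simple_closed_curve C" using F(2) C(1) by blast
    then obtain g where g: "simple_path g" "pathfinish g = pathstart g" "path_image g = C"
      unfolding simple_closed_curve_def by auto
    obtain G :: "real \<Rightarrow> real^3" where G: "continuous_on UNIV G" "\<forall>t. G (t + 1) = G t"
      "\<forall>s t. \<bar>s - t\<bar> < 1 \<longrightarrow> G s = G t \<longrightarrow> s = t" "G ` {0..1} = path_image g" "range G \<subseteq> path_image g"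
      using loop_param[OF g(1,2)] by blast
    have rL: "range G \<subseteq> L" using G(5) g(3) C(1) F(4) by blast
    interpret T: thick_loop G \<tau>
    proof
      show "\<tau> > 0" by (rule assms(3))
      show "continuous_on UNIV G" by (rule G(1))
      show "\<And>t. G (t + 1) = G t" using G(2) by blast
      show "\<And>s t. \<bar>s - t\<bar> < 1 \<Longrightarrow> G s = G t \<Longrightarrow> s = t" using G(3) by blast
      fix x y x' y' assume h: "x \<in> range G" "y \<in> range G" "x' \<in> range G" "y' \<in> range G" "x \<noteq> y" "x' \<noteq> y'"
      show "sd (secant x y) (secant x' y') \<le> (dist x x' + dist y y') / (2 * \<tau>)"
        by (rule F_general[OF assms(2,3)]) (use h rL in auto)
    qed
    have comp: "connected_component_set L x = C"
      unfolding F(4) by (rule component_eq[OF F(1) cc F(3) C])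
    obtain \<gamma> \<gamma>' lam K where R: "(\<forall>t. \<gamma> (t + 1) = \<gamma> t)" "inj_on \<gamma> {0..<1}" "\<gamma> ` {0..1} = G ` {0..1}"
       "(\<forall>t. (\<gamma> has_vector_derivative \<gamma>' t) (at t))" "lam > 0" "(\<forall>t. norm (\<gamma>' t) = lam)"
       "(\<forall>s t. norm (\<gamma>' s - \<gamma>' t) \<le> K * \<bar>s - t\<bar>)"
      using T.C11_core by blast
    have im: "\<gamma> ` {0..1} = connected_component_set L x" using R(3) G(4) g(3) comp by simp
    show "\<exists>\<gamma> \<gamma>' lam K. (\<forall>t. \<gamma> (t + 1) = \<gamma> t) \<and> inj_on \<gamma> {0..<1} \<and>
       \<gamma> ` {0..1} = connected_component_set L x \<and>
       (\<forall>t. (\<gamma> has_vector_derivative \<gamma>' t) (at t)) \<and>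
       lam > 0 \<and> (\<forall>t. norm (\<gamma>' t) = lam) \<and>
       (\<forall>s t. norm (\<gamma>' s - \<gamma>' t) \<le> K * \<bar>s - t\<bar>)"
      apply (rule exI[of _ \<gamma>], rule exI[of _ \<gamma>'], rule exI[of _ lam], rule exI[of _ K])
      using R im by simp
  qed
qed

end
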